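(* For each finite set $I$ define the linear map $\operatorname{bg}[I]:\mathbf{GP}^+[I]\to\mathbf{CGP}^+[I]$ by $$\operatorname{bg}(P)=\sum_{F}(-1)^{\dim F}\operatorname{cone}_F(P),$$ the sum over the nonempty relatively bounded faces $F$ of $P$. Then each $\operatorname{cone}_F(P)$ appearing lies in $\mathbf{CGP}^+[I]$, and the maps $\operatorname{bg}[I]$ form a morphism of Hopf monoids $\operatorname{bg}:\mathbf{GP}^+\to\mathbf{CGP}^+$.
   Context: $\mathbf{GP}^+$ is the Hopf monoid of extended generalized permutahedra: $\mathbf{GP}^+[I]$ has basis the polyhedra $P=\{x\in\mathbb R^I:\sum_{i\in I}x_i=z(I),\ \sum_{i\in A}x_i\le z(A)\ \forall A\subseteq I\}$ with $z:2^I\to\mathbb R\cup\{\infty\}$ submodular on its finite values and $z(I)$ finite; product $m_{S,T}(P,Q)=P\times Q$; coproduct $\Delta_{S,T}(P)=P|_S\otimes P/_S$ where $P|_S\times P/_S$ is the face of $P$ maximizing $\sum_{i\in S}x_i$ if this functional is bounded above on $P$, and $0$ otherwise. $\mathbf{CGP}^+\subseteq\mathbf{GP}^+$ is the Hopf submonoid spanned by the extended generalized permutahedra that are translated polyhedral cones (sets $v+C$ with $C$ a polyhedral cone). For a polyhedron $P$ and $f\in P$, the tangent cone is $\operatorname{cone}_f(P)=\{f+x:\ f+\epsilon x\in P\text{ for all sufficiently small }\epsilon>0\}$; for a face $F$, $\operatorname{cone}_F(P)=\operatorname{cone}_f(P)$ for any $f$ in the relative interior of $F$ (independent of the choice). A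 face $F$ of $P$ is relatively bounded if $F/L$ is a bounded face of $P/L$, where $L$ is the lineality space of $P$. *)

theory Defs
  imports "HOL-Analysis.Analysis"
begin

text \<open>The labels of the species are elements of an arbitrary finite type 'e;
  a finite set I of labels is a subset of UNIV :: 'e set.  The space R^I is realised as the
  subspace of real^'e of vectors vanishing outside I.  Vector spaces of the Hopf monoids are
  free 'k-vector spaces on sets of polyhedra: finitely supported functions from polyhedra to
  the field 'k.  Tensor products of such free spaces are free on pairs of basis elements.\<close>

type_synonym 'e pt = "real^'e"
type_synonym 'e poly = "'e pt set"

definition supp :: "('a \<Rightarrow> 'k::zero) \<Rightarrow> 'a set" where
  "supp c = {P. c P \<noteq> 0}"

definition span_of :: "'a set \<Rightarrow> ('a \<Rightarrow> 'k::zero) set" where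
  "span_of B = {c. finite (supp c) \<and> supp c \<subseteq> B}"

definition RI :: "'e set \<Rightarrow> ('e::finite) pt set" where
  "RI I = {x. \<forall>i. i \<notin> I \<longrightarrow> x $ i = 0}"

definition ext_submodular :: "'e set \<Rightarrow> ('e set \<Rightarrow> ereal) \<Rightarrow> bool" where
  "ext_submodular I z \<longleftrightarrow>
     (\<forall>A \<subseteq> I. z A \<noteq> -\<infinity>) \<and> z I \<noteq> \<infinity> \<and> z {} = 0 \<and>
     (\<forall>A \<subseteq> I. \<forall>B \<subseteq> I. z A \<noteq> \<infinity> \<longrightarrow> z B \<noteq> \<infinity> \<longrightarrow>
        z (A \<union> B) + z (A \<inter> B) \<le> z A + z B)"

definition gp_of :: "'e set \<Rightarrow> ('e set \<Rightarrow> ereal) \<Rightarrow> ('e::finite) poly" where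
  "gp_of I z = {x \<in> RI I. ereal (\<Sum>i\<in>I. x $ i) = z I \<and>
                          (\<forall>A \<subseteq> I. ereal (\<Sum>i\<in>A. x $ i) \<le> z A)}"

text \<open>Basis of GP^+[I]: extended generalized permutahedra.\<close>
definition GP :: "'e set \<Rightarrow> ('e::finite) poly set" where
  "GP I = {P. \<exists>z. ext_submodular I z \<and> P = gp_of I z}"

definition polyhedral_cone :: "('e::finite) poly \<Rightarrow> bool" where
  "polyhedral_cone C \<longleftrightarrow> polyhedron C \<and> cone C"

text \<open>Basis of CGP^+[I]: extended generalized permutahedra that are translated polyhedral cones.\<close>
definition CGP :: "'e set \<Rightarrow> ('e::finite) poly set" where
  "CGP I = {P \<in> GP I. \<exists>v C. polyhedral_cone C \<and> P = (\<lambda>x. v + x) ` C}"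

definition tangent_cone :: "('e::finite) poly \<Rightarrow> 'e pt \<Rightarrow> 'e poly" where
  "tangent_cone P f = {f + x | x. \<exists>e>0. \<forall>\<epsilon>. 0 < \<epsilon> \<and> \<epsilon> < e \<longrightarrow> f + \<epsilon> *\<^sub>R x \<in> P}"

definition face_cone :: "('e::finite) poly \<Rightarrow> 'e poly \<Rightarrow> 'e poly" where
  "face_cone P F = tangent_cone P (SOME f. f \<in> rel_interior F)"

definition lineality :: "('e::finite) poly \<Rightarrow> 'e pt set" where
  "lineality P = {d. \<forall>x\<in>P. \<forall>t::real. x + t *\<^sub>R d \<in> P}"

text \<open>F is relatively bounded: F/L is a bounded face of P/L, L the lineality space of P.
  Boundedness of F/L in the quotient means F \<subseteq> B + L for a bounded B.\<close>
definition rel_bounded_face :: "('e::finite) poly \<Rightarrow> 'e poly \<Rightarrow> bool" where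
  "rel_bounded_face P F \<longleftrightarrow> F face_of P \<and>
     (\<exists>B. bounded B \<and> F \<subseteq> {b + l | b l. b \<in> B \<and> l \<in> lineality P})"

definition dimension :: "('e::finite) poly \<Rightarrow> nat" where
  "dimension F = nat (aff_dim F)"

definition lin_ext :: "('a \<Rightarrow> 'b \<Rightarrow> 'k::comm_ring_1) \<Rightarrow> ('a \<Rightarrow> 'k) \<Rightarrow> ('b \<Rightarrow> 'k)" where
  "lin_ext f c = (\<lambda>Q. \<Sum>P\<in>supp c. c P * f P Q)"

definition bg_basis :: "('e::finite) poly \<Rightarrow> 'e poly \<Rightarrow> 'k::comm_ring_1" where
  "bg_basis P = (\<lambda>Q. \<Sum>F\<in>{F. F face_of P \<and> F \<noteq> {} \<and> rel_bounded_face P F \<and> face_cone P F = Q}.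
                       (-1) ^ dimension F)"

definition bg :: "(('e::finite) poly \<Rightarrow> 'k::comm_ring_1) \<Rightarrow> ('e poly \<Rightarrow> 'k)" where
  "bg c = lin_ext bg_basis c"

definition poly_prod :: "'e set \<Rightarrow> ('e::finite) poly \<Rightarrow> 'e poly \<Rightarrow> 'e poly" where
  "poly_prod S P Q = {(\<chi> i. if i \<in> S then p $ i else q $ i) | p q. p \<in> P \<and> q \<in> Q}"

definition mult :: "'e set \<Rightarrow> (('e::finite) poly \<Rightarrow> 'k::comm_ring_1) \<Rightarrow> ('e poly \<Rightarrow> 'k) \<Rightarrow> ('e poly \<Rightarrow> 'k)" where
  "mult S a b = (\<lambda>R. \<Sum>P\<in>supp a. \<Sum>Q\<in>supp b. if poly_prod S P Q = R then a P * b Q else 0)"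

definition restr :: "'e set \<Rightarrow> ('e::finite) poly \<Rightarrow> 'e poly" where
  "restr S F = (\<lambda>x. \<chi> i. if i \<in> S then x $ i else 0) ` F"

definition bounded_above_on :: "'e set \<Rightarrow> ('e::finite) poly \<Rightarrow> bool" where
  "bounded_above_on S P \<longleftrightarrow> (\<exists>M. \<forall>x\<in>P. (\<Sum>i\<in>S. x $ i) \<le> M)"

definition max_face :: "'e set \<Rightarrow> ('e::finite) poly \<Rightarrow> 'e poly" where
  "max_face S P = {x \<in> P. \<forall>y\<in>P. (\<Sum>i\<in>S. y $ i) \<le> (\<Sum>i\<in>S. x $ i)}"

text \<open>Delta_{S,T}(P) = P|_S \<otimes> P/_S (T the complement of S in I), or 0.\<close>
definition comult :: "'e set \<Rightarrow> 'e set \<Rightarrow> (('e::finite) poly \<Rightarrow> 'k::comm_ring_1) \<Rightarrow> ('e poly \<times> 'e poly \<Rightarrow> 'k)" where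
  "comult S T a = (\<lambda>(R1, R2). \<Sum>P\<in>supp a.
      if bounded_above_on S P \<and> restr S (max_face S P) = R1 \<and> restr T (max_face S P) = R2
      then a P else 0)"

definition tensor_ext :: "('a \<Rightarrow> 'b \<Rightarrow> 'k::comm_ring_1) \<Rightarrow> ('c \<Rightarrow> 'd \<Rightarrow> 'k) \<Rightarrow> ('a \<times> 'c \<Rightarrow> 'k) \<Rightarrow> ('b \<times> 'd \<Rightarrow> 'k)" where
  "tensor_ext f g c = (\<lambda>(R1, R2). \<Sum>PQ\<in>supp c. c PQ * f (fst PQ) R1 * g (snd PQ) R2)"

text \<open>Unit (the point R^{}) and counit (on H[{}]).\<close>
definition unit_elt :: "(('e::finite) poly \<Rightarrow> 'k::comm_ring_1)" where
  "unit_elt = (\<lambda>Q. if Q = RI {} then 1 else 0)"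

definition counit :: "(('e::finite) poly \<Rightarrow> 'k::comm_ring_1) \<Rightarrow> 'k" where
  "counit c = (\<Sum>P\<in>supp c. c P)"

text \<open>Species relabelling along a permutation \<sigma> of the labels (restricting to I \<rightarrow> \<sigma> ` I).\<close>
definition relabel_pt :: "('e \<Rightarrow> 'e) \<Rightarrow> ('e::finite) pt \<Rightarrow> 'e pt" where
  "relabel_pt \<sigma> x = (\<chi> j. x $ inv \<sigma> j)"

definition relabel :: "('e \<Rightarrow> 'e) \<Rightarrow> (('e::finite) poly \<Rightarrow> 'k::comm_ring_1) \<Rightarrow> ('e poly \<Rightarrow> 'k)" where
  "relabel \<sigma> c = (\<lambda>Q. \<Sum>P\<in>supp c. if relabel_pt \<sigma> ` P = Q then c P else 0)"

end

theory Submission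
  imports Defs
begin


definition ssum :: "'e set \<Rightarrow> ('e::finite) pt \<Rightarrow> real" where
  "ssum A x = (\<Sum>i\<in>A. x $ i)"

lemma ssum_add: "ssum A (x + y) = ssum A x + ssum A y"
  by (simp add: ssum_def sum.distrib)
lemma ssum_scale: "ssum A (c *\<^sub>R x) = c * ssum A x"
  by (simp add: ssum_def sum_distrib_left)
lemma ssum_diff: "ssum A (x - y) = ssum A x - ssum A y"
  by (simp add: ssum_def sum_subtractf)
lemma ssum_Un_Int: "ssum (A \<union> B) x + ssum (A \<inter> B) x = ssum A x + ssum B x"
  unfolding ssum_def by (rule sum.union_inter) auto

lemma gp_of_alt: "gp_of I z = {x \<in> RI I. ereal (ssum I x) = z I \<and> (\<forall>A \<subseteq> I. ereal (ssum A x) \<le> z A)}"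
  by (simp add: gp_of_def ssum_def)

definition tight :: "'e set \<Rightarrow> ('e set \<Rightarrow> ereal) \<Rightarrow> ('e::finite) pt \<Rightarrow> 'e set \<Rightarrow> bool" where
  "tight I z f A \<longleftrightarrow> A \<subseteq> I \<and> ereal (ssum A f) = z A"

lemma tight_lattice:
  assumes sm: "ext_submodular I z" and f: "f \<in> gp_of I z"
    and A: "tight I z f A" and B: "tight I z f B"
  shows "tight I z f (A \<union> B) \<and> tight I z f (A \<inter> B)"
proof -
  have AI: "A \<subseteq> I" "B \<subseteq> I" using A B by (auto simp: tight_def)
  have zA: "z A = ereal (ssum A f)" and zB: "z B = ereal (ssum B f)" using A B by (auto simp: tight_def)
  have AB: "A \<union> B \<subseteq> I" "A \<inter> B \<subseteq> I" using AI by auto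
  have le1: "ereal (ssum (A \<union> B) f) \<le> z (A \<union> B)" and le2: "ereal (ssum (A \<inter> B) f) \<le> z (A \<inter> B)"
    using f AB by (auto simp: gp_of_alt)
  have sub: "z (A \<union> B) + z (A \<inter> B) \<le> z A + z B"
  proof -
    have "z A \<noteq> \<infinity>" "z B \<noteq> \<infinity>" using zA zB by auto
    then show ?thesis using sm AI unfolding ext_submodular_def by blast
  qed
  have nm1: "z (A \<union> B) \<noteq> -\<infinity>" "z (A \<inter> B) \<noteq> -\<infinity>" using sm AB unfolding ext_submodular_def by auto
  have eq: "ssum (A \<union> B) f + ssum (A \<inter> B) f = ssum A f + ssum B f" by (rule ssum_Un_Int)
  obtain u where u: "z (A \<union> B) = ereal u"
    using sub nm1 zA zB by (cases "z (A \<union> B)"; cases "z (A \<inter> B)") auto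
  obtain v where v: "z (A \<inter> B) = ereal v"
    using sub nm1 zA zB by (cases "z (A \<union> B)"; cases "z (A \<inter> B)") auto
  from sub le1 le2 u v zA zB eq have "ssum (A \<union> B) f = u \<and> ssum (A \<inter> B) f = v" by auto
  then show ?thesis using u v AI by (auto simp: tight_def)
qed

definition ztight :: "'e set \<Rightarrow> ('e set \<Rightarrow> ereal) \<Rightarrow> ('e::finite) pt \<Rightarrow> 'e set \<Rightarrow> ereal" where
  "ztight I z f A = (if tight I z f A then z A else \<infinity>)"

lemma gp_ofD:
  assumes "x \<in> gp_of I z"
  shows "x \<in> RI I" "ereal (ssum I x) = z I" "\<And>A. A \<subseteq> I \<Longrightarrow> ereal (ssum A x) \<le> z A"
  using assms by (auto simp: gp_of_alt)

lemma RI_iff: "x \<in> RI I \<longleftrightarrow> (\<forall>i. i \<notin> I \<longrightarrow> x $ i = 0)"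
  by (simp add: RI_def)

lemma tight_I: "f \<in> gp_of I z \<Longrightarrow> tight I z f I"
  by (auto simp: tight_def gp_of_alt)

lemma gap_exists:
  assumes f: "f \<in> gp_of I z" and sm: "ext_submodular I z"
  shows "\<exists>d>0. \<forall>A. A \<subseteq> I \<longrightarrow> \<not> tight I z f A \<longrightarrow> z A \<noteq> \<infinity> \<longrightarrow> ssum A f + d \<le> real_of_ereal (z A)"
proof -
  define N where "N = {A. A \<subseteq> I \<and> \<not> tight I z f A \<and> z A \<noteq> \<infinity>}"
  have finN: "finite N" unfolding N_def by simp
  define d where "d = Min (insert 1 ((\<lambda>A. real_of_ereal (z A) - ssum A f) ` N))"
  have pos: "real_of_ereal (z A) - ssum A f > 0" if "A \<in> N" for A
  proof -
    have "A \<subseteq> I" "\<not> tight I z f A" "z A \<noteq> \<infinity>" using that by (auto simp: N_def)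
    moreover have "z A \<noteq> -\<infinity>" using sm \<open>A \<subseteq> I\<close> by (auto simp: ext_submodular_def)
    moreover have "ereal (ssum A f) \<le> z A" using gp_ofD(3)[OF f \<open>A \<subseteq> I\<close>] .
    ultimately show ?thesis by (cases "z A") (auto simp: tight_def)
  qed
  have "d > 0" unfolding d_def using finN pos by (subst Min_gr_iff) auto
  moreover have "ssum A f + d \<le> real_of_ereal (z A)" if "A \<in> N" for A
  proof -
    have "d \<le> real_of_ereal (z A) - ssum A f" unfolding d_def using finN that by (intro Min_le) auto
    then show ?thesis by simp
  qed
  ultimately show ?thesis unfolding N_def by blast
qed

lemma tangent_gp:
  assumes sm: "ext_submodular I z" and f: "f \<in> gp_of I z"
  shows "tangent_cone (gp_of I z) f = gp_of I (ztight I z f)"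
proof
  show "tangent_cone (gp_of I z) f \<subseteq> gp_of I (ztight I z f)"
  proof
    fix y assume "y \<in> tangent_cone (gp_of I z) f"
    then obtain x e where y: "y = f + x" and e: "e > 0" and ex: "\<And>\<epsilon>. 0 < \<epsilon> \<Longrightarrow> \<epsilon> < e \<Longrightarrow> f + \<epsilon> *\<^sub>R x \<in> gp_of I z"
      unfolding tangent_cone_def by blast
    define p where "p = f + (e/2) *\<^sub>R x"
    have p: "p \<in> gp_of I z" unfolding p_def using e by (intro ex) auto
    have "y \<in> RI I"
    proof -
      have "y $ i = 0" if "i \<notin> I" for i
      proof -
        have "p $ i = 0" "f $ i = 0" using gp_ofD(1)[OF p] gp_ofD(1)[OF f] that by (auto simp: RI_def)
        then have "x $ i = 0" using e by (simp add: p_def)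
        then show ?thesis using \<open>f $ i = 0\<close> by (simp add: y)
      qed
      then show ?thesis by (simp add: RI_def)
    qed
    moreover have "ssum I x = 0"
    proof -
      have "ereal (ssum I p) = ereal (ssum I f)" using gp_ofD(2)[OF p] gp_ofD(2)[OF f] by simp
      then have "ssum I p = ssum I f" by simp
      then show ?thesis using e by (simp add: p_def ssum_add ssum_scale)
    qed
    then have "ereal (ssum I y) = ztight I z f I"
      using gp_ofD(2)[OF f] tight_I[OF f] by (simp add: ztight_def y ssum_add)
    moreover have "ereal (ssum A y) \<le> ztight I z f A" if A: "A \<subseteq> I" for A
    proof (cases "tight I z f A")
      case True
      then have zA: "z A = ereal (ssum A f)" by (simp add: tight_def)
      have "ereal (ssum A p) \<le> z A" using gp_ofD(3)[OF p A] .
      then have "(e/2) * ssum A x \<le> 0" using zA by (simp add: p_def ssum_add ssum_scale)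
      then have "ssum A x \<le> 0" using e by (simp add: mult_le_0_iff)
      then show ?thesis using True zA by (simp add: ztight_def y ssum_add)
    qed (simp add: ztight_def)
    ultimately show "y \<in> gp_of I (ztight I z f)" by (simp add: gp_of_alt)
  qed
next
  show "gp_of I (ztight I z f) \<subseteq> tangent_cone (gp_of I z) f"
  proof
    fix y assume y: "y \<in> gp_of I (ztight I z f)"
    obtain d where d: "d > 0" and gap: "\<And>A. A \<subseteq> I \<Longrightarrow> \<not> tight I z f A \<Longrightarrow> z A \<noteq> \<infinity> \<Longrightarrow> ssum A f + d \<le> real_of_ereal (z A)"
      using gap_exists[OF f sm] by blast
    define x where "x = y - f"
    define K where "K = (\<Sum>A\<in>Pow I. \<bar>ssum A x\<bar>) + 1"
    have Kb: "\<bar>ssum A x\<bar> \<le> K - 1" if "A \<subseteq> I" for A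
      unfolding K_def using that by (auto intro!: member_le_sum)
    have Kpos: "K > 0" unfolding K_def by (smt (verit) sum_nonneg abs_ge_zero)
    define e where "e = min 1 (d / K)"
    have epos: "e > 0" using d Kpos by (simp add: e_def)
    have "f + \<epsilon> *\<^sub>R x \<in> gp_of I z" if eps: "0 < \<epsilon>" "\<epsilon> < e" for \<epsilon>
    proof -
      have eps1: "\<epsilon> < 1" "\<epsilon> * K < d" using eps Kpos by (auto simp: e_def field_simps)
      have RIy: "y \<in> RI I" using gp_ofD(1)[OF y] .
      have RIf: "f \<in> RI I" using gp_ofD(1)[OF f] .
      have "f + \<epsilon> *\<^sub>R x \<in> RI I" using RIy RIf by (simp add: RI_def x_def)
      moreover have "ssum I y = ssum I f"
      proof -
        have "ereal (ssum I y) = ereal (ssum I f)"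
          using gp_ofD(2)[OF y] gp_ofD(2)[OF f] tight_I[OF f] by (simp add: ztight_def)
        then show ?thesis by simp
      qed
      then have "ereal (ssum I (f + \<epsilon> *\<^sub>R x)) = z I"
        using gp_ofD(2)[OF f] by (simp add: x_def ssum_add ssum_scale ssum_diff)
      moreover have "ereal (ssum A (f + \<epsilon> *\<^sub>R x)) \<le> z A" if A: "A \<subseteq> I" for A
      proof (cases "tight I z f A")
        case True
        then have zA: "z A = ereal (ssum A f)" by (simp add: tight_def)
        have "ereal (ssum A y) \<le> ztight I z f A" using gp_ofD(3)[OF y A] .
        then have "ssum A y \<le> ssum A f" using True zA by (simp add: ztight_def)
        then have "ssum A (f + \<epsilon> *\<^sub>R x) \<le> ssum A f"
          using eps by (simp add: x_def ssum_add ssum_scale ssum_diff mult_nonneg_nonpos)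
        then show ?thesis using zA by simp
      next
        case False
        show ?thesis
        proof (cases "z A = \<infinity>")
          case False2: False
          have g: "ssum A f + d \<le> real_of_ereal (z A)" using gap[OF A False False2] .
          have "\<epsilon> * ssum A x \<le> \<epsilon> * K"
            using Kb[OF A] eps by (intro mult_left_mono) auto
          then have "ssum A (f + \<epsilon> *\<^sub>R x) \<le> real_of_ereal (z A)"
            using g eps1 by (simp add: ssum_add ssum_scale)
          moreover have "z A \<noteq> -\<infinity>" using sm A by (auto simp: ext_submodular_def)
          ultimately show ?thesis using False2 by (cases "z A") auto
        qed simp
      qed
      ultimately show ?thesis by (simp add: gp_of_alt)
    qed
    then show "y \<in> tangent_cone (gp_of I z) f"
      unfolding tangent_cone_def using epos by (intro CollectI exI[of _ x]) (auto simp: x_def)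
  qed
qed




lemma tight_ri:
  assumes FP: "F \<subseteq> gp_of I z" and f: "f \<in> rel_interior F" and t: "tight I z f A" and g: "g \<in> F"
  shows "tight I z g A"
proof (cases "g = f")
  case True then show ?thesis using t by simp
next
  case False
  obtain e where e: "e > 0" and sub: "cball f e \<inter> affine hull F \<subseteq> F" and fF: "f \<in> F"
    using f by (auto simp: rel_interior_cball)
  define t where "t = e / norm (f - g)"
  have tpos: "t > 0" using e False by (simp add: t_def)
  define h where "h = (1 + t) *\<^sub>R f + (- t) *\<^sub>R g"
  have "h \<in> affine hull F"
    unfolding h_def by (rule mem_affine) (use fF g in \<open>auto intro: hull_inc\<close>)
  moreover have "dist f h = e"
  proof -
    have "f - h = t *\<^sub>R (g - f)" by (simp add: h_def algebra_simps)
    then have "dist f h = t * norm (g - f)" using tpos by (simp add: dist_norm)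
    also have "\<dots> = e" using False by (simp add: t_def norm_minus_commute)
    finally show ?thesis .
  qed
  ultimately have "h \<in> F" using sub by auto
  have A: "A \<subseteq> I" and zA: "z A = ereal (ssum A f)" using t by (auto simp: tight_def)
  have "ereal (ssum A h) \<le> z A" using FP \<open>h \<in> F\<close> A by (auto dest: gp_ofD(3))
  then have h1: "(1 + t) * ssum A f - t * ssum A g \<le> ssum A f"
    using zA by (simp add: h_def ssum_add ssum_scale ssum_diff)
  have "ereal (ssum A g) \<le> z A" using FP g A by (auto dest: gp_ofD(3))
  then have h2: "ssum A g \<le> ssum A f" using zA by simp
  from h1 tpos have "t * ssum A f \<le> t * ssum A g" by (simp add: algebra_simps)
  then have "ssum A f \<le> ssum A g" using tpos by simp
  then have "ssum A g = ssum A f" using h2 by simp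
  then show ?thesis using A zA by (simp add: tight_def)
qed

definition zF :: "'e set \<Rightarrow> ('e set \<Rightarrow> ereal) \<Rightarrow> ('e::finite) poly \<Rightarrow> 'e set \<Rightarrow> ereal" where
  "zF I z F A = (if \<forall>g\<in>F. tight I z g A then z A else \<infinity>)"

lemma ztight_eq_zF:
  assumes "F \<subseteq> gp_of I z" "f \<in> rel_interior F"
  shows "ztight I z f = zF I z F"
proof -
  have fF: "f \<in> F" using assms(2) rel_interior_subset by auto
  show ?thesis
  proof
    fix A
    have "tight I z f A \<longleftrightarrow> (\<forall>g\<in>F. tight I z g A)"
      using tight_ri[OF assms, of A] fF by blast
    then show "ztight I z f A = zF I z F A" unfolding ztight_def zF_def by simp
  qed
qed

lemma some_ri:
  fixes F :: "('e::finite) poly"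
  assumes "F face_of P" "F \<noteq> {}"
  shows "(SOME f. f \<in> rel_interior F) \<in> rel_interior F"
proof -
  have "convex F" using assms(1) by (rule face_of_imp_convex)
  then have "rel_interior F \<noteq> {}" using assms(2) rel_interior_eq_empty by blast
  then obtain f where "f \<in> rel_interior F" by blast
  then show ?thesis by (rule someI)
qed

lemma face_cone_gp:
  assumes sm: "ext_submodular I z" and F: "F face_of gp_of I z" "F \<noteq> {}"
  shows "face_cone (gp_of I z) F = gp_of I (zF I z F)"
proof -
  define f where "f = (SOME f. f \<in> rel_interior F)"
  have fr: "f \<in> rel_interior F" unfolding f_def using some_ri[OF F] .
  have FP: "F \<subseteq> gp_of I z" using F face_of_imp_subset by blast
  have "f \<in> gp_of I z" using fr FP rel_interior_subset by blast
  then show ?thesis unfolding face_cone_def f_def[symmetric]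
    using tangent_gp[OF sm] ztight_eq_zF[OF FP fr] by simp
qed

lemma tangent_ri_eq:
  assumes sm: "ext_submodular I z" and F: "F \<subseteq> gp_of I z" and f: "f \<in> rel_interior F"
  shows "tangent_cone (gp_of I z) f = gp_of I (zF I z F)"
proof -
  have "f \<in> gp_of I z" using f F rel_interior_subset by blast
  then show ?thesis using tangent_gp[OF sm] ztight_eq_zF[OF F f] by simp
qed

lemma zF_submodular:
  assumes sm: "ext_submodular I z" and F: "F \<subseteq> gp_of I z" "F \<noteq> {}"
  shows "ext_submodular I (zF I z F)"
proof -
  have tI: "\<forall>g\<in>F. tight I z g I" using F tight_I by blast
  have t0: "\<forall>g\<in>F. tight I z g {}" using sm by (auto simp: tight_def ssum_def ext_submodular_def)
  have fin: "z A \<noteq> \<infinity>" if "\<forall>g\<in>F. tight I z g A" for A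
    using that F(2) by (auto simp: tight_def)
  have "zF I z F A \<noteq> -\<infinity>" if "A \<subseteq> I" for A
    using sm that by (auto simp: zF_def ext_submodular_def)
  moreover have "zF I z F I \<noteq> \<infinity>" using tI fin by (simp add: zF_def)
  moreover have "zF I z F {} = 0" using t0 sm by (simp add: zF_def ext_submodular_def)
  moreover have "zF I z F (A \<union> B) + zF I z F (A \<inter> B) \<le> zF I z F A + zF I z F B"
    if AB: "A \<subseteq> I" "B \<subseteq> I" "zF I z F A \<noteq> \<infinity>" "zF I z F B \<noteq> \<infinity>" for A B
  proof -
    have tA: "\<forall>g\<in>F. tight I z g A" and tB: "\<forall>g\<in>F. tight I z g B"
      using AB by (auto simp: zF_def split: if_splits)
    have tU: "\<forall>g\<in>F. tight I z g (A \<union> B)" and tN: "\<forall>g\<in>F. tight I z g (A \<inter> B)"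
      using tight_lattice[OF sm] tA tB F(1) by blast+
    have "z (A \<union> B) + z (A \<inter> B) \<le> z A + z B"
      using sm AB(1,2) fin[OF tA] fin[OF tB] unfolding ext_submodular_def by blast
    then show ?thesis using tA tB tU tN by (simp add: zF_def)
  qed
  ultimately show ?thesis unfolding ext_submodular_def by blast
qed

definition ind :: "'e set \<Rightarrow> ('e::finite) pt" where
  "ind A = (\<chi> i. if i \<in> A then 1 else 0)"

lemma ssum_inner: "ssum A x = ind A \<bullet> x"
proof -
  have "ind A \<bullet> x = (\<Sum>i\<in>UNIV. if i \<in> A then x $ i else 0)"
    unfolding ind_def inner_vec_def by (intro sum.cong) auto
  also have "\<dots> = sum (\<lambda>i. x $ i) {i\<in>UNIV. i \<in> A}" by (rule sum.inter_filter[symmetric]) simp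
  finally show ?thesis by (simp add: ssum_def)
qed

lemma polyhedron_RI: "polyhedron (RI (I::('e::finite) set))"
proof -
  have "RI I = \<Inter> ((\<lambda>i. {x. (axis i 1 :: 'e pt) \<bullet> x = 0}) ` (- I))"
    by (auto simp: RI_def inner_axis')
  then show ?thesis by (auto intro!: polyhedron_Inter polyhedron_hyperplane)
qed

lemma polyhedron_gp: "polyhedron (gp_of I (z::'e set \<Rightarrow> ereal) :: ('e::finite) poly)"
proof -
  have eq: "gp_of I z = (RI I \<inter> {x. ereal (ssum I x) = z I}) \<inter> \<Inter> ((\<lambda>A. {x. ereal (ssum A x) \<le> z A}) ` Pow I)"
    by (auto simp: gp_of_alt)
  have h1: "polyhedron {x::'e pt. ereal (ssum A x) \<le> z A}" for A
  proof (cases "z A")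
    case (real r)
    then show ?thesis using polyhedron_halfspace_le[of "ind A" r] by (simp add: ssum_inner)
  qed (auto)
  have h2: "polyhedron {x::'e pt. ereal (ssum I x) = z I}"
  proof (cases "z I")
    case (real r)
    then show ?thesis using polyhedron_hyperplane[of "ind I" r] by (simp add: ssum_inner)
  qed (auto)
  have h3: "polyhedron (\<Inter> ((\<lambda>A. {x::'e pt. ereal (ssum A x) \<le> z A}) ` Pow I))"
  proof (rule polyhedron_Inter)
    show "finite ((\<lambda>A. {x::'e pt. ereal (ssum A x) \<le> z A}) ` Pow I)" by simp
    fix S assume "S \<in> (\<lambda>A. {x::'e pt. ereal (ssum A x) \<le> z A}) ` Pow I"
    then obtain A where "S = {x::'e pt. ereal (ssum A x) \<le> z A}" by blast
    then show "polyhedron S" using h1 by simp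
  qed
  show ?thesis unfolding eq by (intro polyhedron_Int polyhedron_RI h2 h3)
qed




lemma cgp_cone:
  assumes sm: "ext_submodular I z" and F: "F face_of gp_of I z" "F \<noteq> {}"
  shows "face_cone (gp_of I z) F \<in> CGP I"
proof -
  have FP: "F \<subseteq> gp_of I z" using F face_of_imp_subset by blast
  have GP: "face_cone (gp_of I z) F \<in> GP I"
    unfolding face_cone_gp[OF sm F] GP_def using zF_submodular[OF sm FP F(2)] by blast
  define f where "f = (SOME f. f \<in> rel_interior F)"
  have fF: "f \<in> F" unfolding f_def using some_ri[OF F] rel_interior_subset by blast
  define T where "T = {A. A \<subseteq> I \<and> (\<forall>g\<in>F. tight I z g A)}"
  define C where "C = RI I \<inter> {x. ssum I x = 0} \<inter> \<Inter> ((\<lambda>A. {x. ssum A x \<le> 0}) ` T)"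
  have finT: "finite T" unfolding T_def by simp
  have polyC: "polyhedron C" unfolding C_def
  proof (intro polyhedron_Int polyhedron_RI polyhedron_Inter)
    show "polyhedron {x::'a pt. ssum I x = 0}" unfolding ssum_inner by (rule polyhedron_hyperplane)
    show "finite ((\<lambda>A. {x::'a pt. ssum A x \<le> 0}) ` T)" using finT by simp
    show "polyhedron S" if "S \<in> (\<lambda>A. {x::'a pt. ssum A x \<le> 0}) ` T" for S
      using that unfolding ssum_inner by (auto intro: polyhedron_halfspace_le)
  qed
  have coneC: "cone C" unfolding C_def cone_def by (auto simp: RI_def ssum_scale mult_nonneg_nonpos)
  have tIf: "tight I z f I" using tight_I FP fF by blast
  have eq: "gp_of I (zF I z F) = (\<lambda>x. f + x) ` C"
  proof -
    have "y \<in> gp_of I (zF I z F) \<longleftrightarrow> y - f \<in> C" for y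
    proof -
      have RIf: "f \<in> RI I" using FP fF gp_ofD(1) by blast
      have zI: "zF I z F I = ereal (ssum I f)" using tIf FP fF tight_I by (auto simp: zF_def tight_def)
      have c1: "y \<in> RI I \<longleftrightarrow> y - f \<in> RI I" using RIf by (auto simp: RI_def)
      have c2: "ereal (ssum I y) = zF I z F I \<longleftrightarrow> ssum I (y - f) = 0" using zI by (simp add: ssum_diff)
      have c3: "ereal (ssum A y) \<le> zF I z F A \<longleftrightarrow> (A \<in> T \<longrightarrow> ssum A (y - f) \<le> 0)" if "A \<subseteq> I" for A
      proof (cases "A \<in> T")
        case True
        then have "z A = ereal (ssum A f)" using fF by (auto simp: T_def tight_def)
        then show ?thesis using True by (auto simp: zF_def T_def ssum_diff)
      next
        case False then show ?thesis using that by (auto simp: zF_def T_def)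
      qed
      have TI: "\<And>A. A \<in> T \<Longrightarrow> A \<subseteq> I" by (simp add: T_def)
      show ?thesis unfolding gp_of_alt C_def using c1 c2 c3 TI by blast
    qed
    note iff = this
    show ?thesis
    proof
      show "gp_of I (zF I z F) \<subseteq> (\<lambda>x. f + x) ` C"
      proof
        fix y assume "y \<in> gp_of I (zF I z F)"
        then have "y - f \<in> C" using iff by blast
        moreover have "y = f + (y - f)" by simp
        ultimately show "y \<in> (\<lambda>x. f + x) ` C" by blast
      qed
      show "(\<lambda>x. f + x) ` C \<subseteq> gp_of I (zF I z F)"
      proof
        fix y assume "y \<in> (\<lambda>x. f + x) ` C"
        then obtain c where "c \<in> C" "y = f + c" by blast
        then have "y - f \<in> C" by simp
        then show "y \<in> gp_of I (zF I z F)" using iff by blast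
      qed
    qed
  qed
  have "polyhedral_cone C" using polyC coneC by (simp add: polyhedral_cone_def)
  then show ?thesis unfolding CGP_def using GP eq face_cone_gp[OF sm F] by blast
qed




lemma GP_E:
  assumes "P \<in> GP I"
  obtains z where "ext_submodular I z" "P = gp_of I z"
  using assms by (auto simp: GP_def)

lemma conj1:
  assumes "P \<in> GP I" "F face_of P" "F \<noteq> {}" 
  shows "face_cone P F \<in> CGP I"
  using assms cgp_cone by (metis GP_E)

lemma supp_sum_eq:
  assumes "finite K" "supp c \<subseteq> K" "\<And>P. P \<in> K \<Longrightarrow> c P = 0 \<Longrightarrow> g P = 0"
  shows "(\<Sum>P\<in>supp c. g P) = (\<Sum>P\<in>K. g P)"
  by (rule sum.mono_neutral_left) (use assms in \<open>auto simp: supp_def\<close>)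

lemma lin_ext_K:
  assumes "finite K" "supp c \<subseteq> K"
  shows "lin_ext f c Q = (\<Sum>P\<in>K. c P * f P Q)"
  unfolding lin_ext_def by (rule supp_sum_eq) (use assms in auto)

lemma finite_faces_gp: "P \<in> GP I \<Longrightarrow> finite {F. F face_of P}"
  by (metis GP_E finite_polyhedron_faces polyhedron_gp)

lemma supp_bg_basis:
  assumes "P \<in> GP I"
  shows "supp (bg_basis P :: _ \<Rightarrow> 'k::comm_ring_1) \<subseteq> {face_cone P F | F. F face_of P \<and> F \<noteq> {} \<and> rel_bounded_face P F}"
proof
  fix Q assume "Q \<in> supp (bg_basis P :: _ \<Rightarrow> 'k)"
  then have "(bg_basis P Q :: 'k) \<noteq> 0" by (simp add: supp_def)
  then have "{F. F face_of P \<and> F \<noteq> {} \<and> rel_bounded_face P F \<and> face_cone P F = Q} \<noteq> {}"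
    unfolding bg_basis_def by (metis sum.empty)
  then show "Q \<in> {face_cone P F | F. F face_of P \<and> F \<noteq> {} \<and> rel_bounded_face P F}" by blast
qed

lemma finite_supp_bg_basis:
  assumes "P \<in> GP I"
  shows "finite (supp (bg_basis P :: _ \<Rightarrow> 'k::comm_ring_1))"
proof -
  have "finite {face_cone P F | F. F face_of P \<and> F \<noteq> {} \<and> rel_bounded_face P F}"
    using finite_faces_gp[OF assms] by (simp add: setcompr_eq_image)
  then show ?thesis using supp_bg_basis[OF assms] finite_subset by blast
qed

lemma supp_lin_ext: "supp (lin_ext f c) \<subseteq> (\<Union>P\<in>supp c. supp (f P))"
proof
  fix Q assume "Q \<in> supp (lin_ext f c)"
  then have "(\<Sum>P\<in>supp c. c P * f P Q) \<noteq> 0" by (simp add: supp_def lin_ext_def)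
  then obtain P where "P \<in> supp c" "c P * f P Q \<noteq> 0" by (meson sum.neutral)
  then show "Q \<in> (\<Union>P\<in>supp c. supp (f P))" by (auto simp: supp_def)
qed

lemma conj2:
  fixes c :: "('e::finite) poly \<Rightarrow> 'k::comm_ring_1"
  assumes "c \<in> span_of (GP I)"
  shows "bg c \<in> span_of (CGP I)"
proof -
  have fin: "finite (supp c)" and sub: "supp c \<subseteq> GP I" using assms by (auto simp: span_of_def)
  have "supp (bg c) \<subseteq> (\<Union>P\<in>supp c. supp (bg_basis P :: _ \<Rightarrow> 'k))" unfolding bg_def using supp_lin_ext[of bg_basis c] by simp
  moreover have "finite (\<Union>P\<in>supp c. supp (bg_basis P ::_ \<Rightarrow> 'k))"
    using fin sub finite_supp_bg_basis by blast
  moreover have "(\<Union>P\<in>supp c. supp (bg_basis P ::_ \<Rightarrow> 'k)) \<subseteq> CGP I"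
    using sub supp_bg_basis conj1 unfolding rel_bounded_face_def by blast
  ultimately show ?thesis unfolding span_of_def using finite_subset by blast
qed

lemma RI_empty: "RI {} = {0}"
  by (auto simp: RI_def vec_eq_iff)

lemma face_of_sing_iff: "F face_of {a} \<longleftrightarrow> F = {} \<or> F = {a}"
  using face_of_imp_subset face_of_refl convex_singleton by (metis empty_face_of subset_singletonD)

lemma tangent_point: "tangent_cone {0::('e::finite) pt} 0 = {0}"
proof
  show "tangent_cone {0::'e pt} 0 \<subseteq> {0}"
  proof
    fix y assume "y \<in> tangent_cone {0::'e pt} 0"
    then obtain x e where y: "y = 0 + x" and e: "e > 0" and h: "\<forall>\<epsilon>. 0 < \<epsilon> \<and> \<epsilon> < e \<longrightarrow> 0 + \<epsilon> *\<^sub>R x \<in> {0::'e pt}"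
      unfolding tangent_cone_def by blast
    have "0 < e/2 \<and> e/2 < e" using e by simp
    then have "0 + (e/2) *\<^sub>R x \<in> {0::'e pt}" using h by blast
    then have "(e/2) *\<^sub>R x = 0" by simp
    then have "x = 0" using e by simp
    then show "y \<in> {0}" using y by simp
  qed
  show "{0} \<subseteq> tangent_cone {0::'e pt} 0"
    unfolding tangent_cone_def by (auto intro!: exI[of _ 1])
qed

lemma bg_basis_point: "bg_basis {0::('e::finite) pt} Q = (if Q = {0} then 1 else 0)"
proof -
  have fc: "face_cone {0::'e pt} {0} = {0}"
  proof -
    have "rel_interior {0::'e pt} = {0}" by simp
    then have "(SOME f. f \<in> rel_interior {0::'e pt}) = 0" by simp
    then show ?thesis unfolding face_cone_def using tangent_point by simp
  qed
  have lin: "0 \<in> lineality {0::'e pt}" by (simp add: lineality_def)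
  have rb: "rel_bounded_face {0::'e pt} {0}"
    unfolding rel_bounded_face_def
  proof (intro conjI exI)
    show "{0::'e pt} face_of {0}" by (simp add: face_of_sing_iff)
    show "bounded {0::'e pt}" by simp
    show "{0::'e pt} \<subseteq> {b + l |b l. b \<in> {0} \<and> l \<in> lineality {0}}" using lin by force
  qed
  have "{F. F face_of {0::'e pt} \<and> F \<noteq> {} \<and> rel_bounded_face {0} F \<and> face_cone {0} F = Q}
        = (if Q = {0} then {{0}} else {})"
  proof (cases "Q = {0}")
    case True
    show ?thesis
    proof (rule set_eqI, rule iffI)
      fix F assume "F \<in> {F. F face_of {0::'e pt} \<and> F \<noteq> {} \<and> rel_bounded_face {0} F \<and> face_cone {0} F = Q}"
      then have "F face_of {0::'e pt}" "F \<noteq> {}" by auto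
      then have "F = {0}" by (metis face_of_sing_iff)
      then show "F \<in> (if Q = {0} then {{0}} else {})" using True by simp
    next
      fix F :: "'e pt set" assume "F \<in> (if Q = {0::'e pt} then {{0}} else {})"
      then have "F = {0}" using True by simp
      then show "F \<in> {F. F face_of {0::'e pt} \<and> F \<noteq> {} \<and> rel_bounded_face {0} F \<and> face_cone {0} F = Q}"
        using fc rb True by (simp add: face_of_sing_iff)
    qed
  next
    case False
    have "F = {0}" if "F face_of {0::'e pt}" "F \<noteq> {}" for F using that by (simp add: face_of_sing_iff)
    then show ?thesis using False fc by auto
  qed
  moreover have "dimension {0::'e pt} = 0" by (simp add: dimension_def)
  ultimately show ?thesis unfolding bg_basis_def by simp
qed

lemma conj_unit: "bg (unit_elt :: ('e::finite) poly \<Rightarrow> 'k::field) = unit_elt"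
proof
  fix Q
  have "supp (unit_elt :: 'e poly \<Rightarrow> 'k) = {{0}}" by (auto simp: supp_def unit_elt_def RI_empty)
  then show "bg (unit_elt :: 'e poly \<Rightarrow> 'k) Q = unit_elt Q"
    by (simp add: bg_def lin_ext_def unit_elt_def RI_empty bg_basis_point)
qed

lemma GP_empty: "GP {} = {{0::('e::finite) pt}}"
proof -
  have "gp_of {} z = {0::'e pt}" if "ext_submodular {} z" for z
    using that by (auto simp: gp_of_def RI_empty ext_submodular_def)
  moreover have "ext_submodular {} (\<lambda>_. 0)" by (simp add: ext_submodular_def)
  ultimately show ?thesis unfolding GP_def by blast
qed

lemma conj_counit:
  assumes "(c :: ('e::finite) poly \<Rightarrow> 'k::field) \<in> span_of (GP {})"
  shows "counit (bg c) = counit c"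
proof -
  have sc: "supp c \<subseteq> {{0}}" using assms by (auto simp: span_of_def GP_empty)
  have bgc: "bg c Q = c {0} * (if Q = {0} then 1 else 0)" for Q
    unfolding bg_def by (subst lin_ext_K[of "{{0}}"]) (use sc in \<open>auto simp: bg_basis_point\<close>)
  have s2: "supp (bg c) \<subseteq> {{0}}" by (auto simp: supp_def bgc)
  have "counit (bg c) = (\<Sum>P\<in>{{0}}. bg c P)"
    unfolding counit_def by (rule supp_sum_eq) (use s2 in \<open>auto simp: supp_def\<close>)
  also have "\<dots> = c {0}" by (simp add: bgc)
  also have "\<dots> = (\<Sum>P\<in>{{0}}. c P)" by simp
  also have "\<dots> = counit c"
    unfolding counit_def by (rule supp_sum_eq[symmetric]) (use sc in \<open>auto simp: supp_def\<close>)
  finally show ?thesis .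
qed




definition psum :: "('e::finite) poly \<Rightarrow> 'e poly \<Rightarrow> 'e poly" where
  "psum A B = {p + q | p q. p \<in> A \<and> q \<in> B}"

definition pr :: "'e set \<Rightarrow> ('e::finite) pt \<Rightarrow> 'e pt" where
  "pr S x = (\<chi> i. if i \<in> S then x $ i else 0)"

lemma linear_pr: "linear (pr S)"
  by (rule linearI) (auto simp: pr_def vec_eq_iff)

lemma pr_add: "pr S (x + y) = pr S x + pr S y" by (simp add: pr_def vec_eq_iff)
lemma pr_scale: "pr S (c *\<^sub>R x) = c *\<^sub>R pr S x" by (simp add: pr_def vec_eq_iff)
lemma pr_RI: "pr S x \<in> RI S" by (simp add: pr_def RI_def)
lemma pr_id: "x \<in> RI S \<Longrightarrow> pr S x = x" by (auto simp: pr_def RI_def vec_eq_iff)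
lemma pr_zero: "S \<inter> T = {} \<Longrightarrow> x \<in> RI T \<Longrightarrow> pr S x = 0" by (auto simp: pr_def RI_def vec_eq_iff)

lemma RI_add: "x \<in> RI S \<Longrightarrow> y \<in> RI S \<Longrightarrow> x + y \<in> RI S" by (simp add: RI_def)
lemma RI_scale: "x \<in> RI S \<Longrightarrow> c *\<^sub>R x \<in> RI S" by (simp add: RI_def)
lemma RI_mono: "x \<in> RI S \<Longrightarrow> S \<subseteq> T \<Longrightarrow> x \<in> RI T" by (auto simp: RI_def)

lemma RI_other: "q \<in> RI T \<Longrightarrow> S \<inter> T = {} \<Longrightarrow> i \<in> S \<Longrightarrow> q $ i = 0"
  by (auto simp: RI_def)

lemma restr_eq: "restr S F = pr S ` F" by (simp add: restr_def pr_def)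

lemma bounded_linear_pr: "bounded_linear (pr S)"
  using linear_pr linear_conv_bounded_linear by blast

context
  fixes S T :: "('e::finite) set"
  assumes disj: "S \<inter> T = {}"
begin

lemma pr_sum1: "p \<in> RI S \<Longrightarrow> q \<in> RI T \<Longrightarrow> pr S (p + q) = p"
  using disj by (simp add: pr_add pr_id pr_zero)

lemma pr_sum2: "p \<in> RI S \<Longrightarrow> q \<in> RI T \<Longrightarrow> pr T (p + q) = q"
  using disj by (simp add: pr_add pr_id pr_zero[of T S] inf_commute)

lemma poly_prod_eq: "A \<subseteq> RI S \<Longrightarrow> B \<subseteq> RI T \<Longrightarrow> poly_prod S A B = psum A B"
proof -
  assume A: "A \<subseteq> RI S" and B: "B \<subseteq> RI T"
  have "(\<chi> i. if i \<in> S then p $ i else q $ i) = p + q" if "p \<in> A" "q \<in> B" for p q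
  proof -
    have "p \<in> RI S" "q \<in> RI T" using that A B by auto
    then show ?thesis using disj RI_other[of q T S] by (auto simp: vec_eq_iff RI_def)
  qed
  then show "poly_prod S A B = psum A B" unfolding poly_prod_def psum_def by (auto; metis)
qed

lemma psum_RI: "A \<subseteq> RI S \<Longrightarrow> B \<subseteq> RI T \<Longrightarrow> psum A B \<subseteq> RI (S \<union> T)"
  unfolding psum_def by (auto intro!: RI_add intro: RI_mono)

lemma restr_psum1: "A \<subseteq> RI S \<Longrightarrow> B \<subseteq> RI T \<Longrightarrow> B \<noteq> {} \<Longrightarrow> pr S ` psum A B = A"
proof -
  assume A: "A \<subseteq> RI S" and B: "B \<subseteq> RI T" "B \<noteq> {}"
  then obtain b where b: "b \<in> B" by blast
  show "pr S ` psum A B = A"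
  proof
    show "pr S ` psum A B \<subseteq> A" using A B by (auto simp: psum_def pr_sum1 subset_iff)
    show "A \<subseteq> pr S ` psum A B"
    proof
      fix a assume "a \<in> A"
      then have "a + b \<in> psum A B" "pr S (a + b) = a" using b A B by (auto simp: psum_def pr_sum1 subset_iff)
      then show "a \<in> pr S ` psum A B" by (metis image_eqI)
    qed
  qed
qed

lemma restr_psum2: "A \<subseteq> RI S \<Longrightarrow> B \<subseteq> RI T \<Longrightarrow> A \<noteq> {} \<Longrightarrow> pr T ` psum A B = B"
proof -
  assume A: "A \<subseteq> RI S" "A \<noteq> {}" and B: "B \<subseteq> RI T"
  then obtain a where a: "a \<in> A" by blast
  show "pr T ` psum A B = B"
  proof
    show "pr T ` psum A B \<subseteq> B" using A B by (auto simp: psum_def pr_sum2 subset_iff)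
    show "B \<subseteq> pr T ` psum A B"
    proof
      fix b assume "b \<in> B"
      then have "a + b \<in> psum A B" "pr T (a + b) = b" using a A B by (auto simp: psum_def pr_sum2 subset_iff)
      then show "b \<in> pr T ` psum A B" by (metis image_eqI)
    qed
  qed
qed

lemma psum_inj:
  assumes "A \<subseteq> RI S" "B \<subseteq> RI T" "A' \<subseteq> RI S" "B' \<subseteq> RI T" "A \<noteq> {}" "B \<noteq> {}" "A' \<noteq> {}" "B' \<noteq> {}"
    and "psum A B = psum A' B'"
  shows "A = A' \<and> B = B'"
  using restr_psum1[of A B] restr_psum1[of A' B'] restr_psum2[of A B] restr_psum2[of A' B'] assms by metis

definition LL :: "'e pt \<times> 'e pt \<Rightarrow> 'e pt \<times> 'e pt" where
  "LL = (\<lambda>(p, q). ((\<chi> i. if i \<in> S then p $ i else q $ i), (\<chi> i. if i \<in> S then q $ i else p $ i)))"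

lemma linear_LL: "linear LL"
  by (rule linearI) (auto simp: LL_def vec_eq_iff split: prod.splits)

lemma LL_LL: "LL (LL x) = x"
  by (cases x) (auto simp: LL_def vec_eq_iff)

lemma inj_LL: "inj LL"
  by (metis LL_LL injI)

lemma LL_img: "A \<subseteq> RI S \<Longrightarrow> B \<subseteq> RI T \<Longrightarrow> LL ` (A \<times> B) = psum A B \<times> {0}"
proof -
  assume A: "A \<subseteq> RI S" and B: "B \<subseteq> RI T"
  have LLpq: "LL (p, q) = (p + q, 0)" if "p \<in> A" "q \<in> B" for p q
  proof -
    have "p \<in> RI S" "q \<in> RI T" using that A B by auto
    then show ?thesis using disj RI_other[of q T S] by (auto simp: LL_def vec_eq_iff RI_def)
  qed
  show ?thesis
  proof
    show "LL ` (A \<times> B) \<subseteq> psum A B \<times> {0}" using LLpq by (auto simp: psum_def) blast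
    show "psum A B \<times> {0} \<subseteq> LL ` (A \<times> B)"
    proof
      fix x assume "x \<in> psum A B \<times> {0::'e pt}"
      then obtain p q where "p \<in> A" "q \<in> B" "x = (p + q, 0)" by (auto simp: psum_def)
      then show "x \<in> LL ` (A \<times> B)" using LLpq by (metis SigmaI image_eqI)
    qed
  qed
qed

lemma convex_psum: "convex A \<Longrightarrow> convex B \<Longrightarrow> convex (psum A B)"
proof -
  assume "convex A" "convex B"
  then have "convex (\<Union>x\<in> A. \<Union>y \<in> B. {x + y})" by (rule convex_sums)
  moreover have "(\<Union>x\<in> A. \<Union>y \<in> B. {x + y}) = psum A B" by (auto simp: psum_def)
  ultimately show ?thesis by simp
qed

lemma faces_psum:
  assumes A: "A \<subseteq> RI S" and B: "B \<subseteq> RI T"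
  shows "H face_of psum A B \<longleftrightarrow> (\<exists>F G. F face_of A \<and> G face_of B \<and> H = psum F G)"
proof -
  have z: "{0::'e pt} face_of {0}" by (simp add: face_of_refl)
  have "H face_of psum A B \<longleftrightarrow> (H \<times> {0::'e pt}) face_of (psum A B \<times> {0})"
    using z by (auto simp: face_of_Times_eq face_of_Times)
  also have "\<dots> \<longleftrightarrow> (H \<times> {0}) face_of LL ` (A \<times> B)" using LL_img[OF A B] by simp
  also have "\<dots> \<longleftrightarrow> (\<exists>F G. F face_of A \<and> G face_of B \<and> H = psum F G)"
  proof
    assume h: "(H \<times> {0}) face_of LL ` (A \<times> B)"
    then have "H \<times> {0} \<in> {T. T face_of LL ` (A \<times> B)}" by simp
    then obtain K where K: "K face_of A \<times> B" "H \<times> {0} = LL ` K"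
      using faces_of_linear_image[OF linear_LL inj_LL, of "A \<times> B"] by auto
    then obtain F G where FG: "F face_of A" "G face_of B" "K = F \<times> G"
      using face_of_Times_decomp by blast
    have "LL ` K = psum F G \<times> {0}"
      using FG LL_img[of F G] A B face_of_imp_subset by (metis subset_trans)
    then have "H \<times> {0::'e pt} = psum F G \<times> {0}" using K by simp
    then have "H = psum F G" by (metis fst_image_times insert_not_empty)
    then show "\<exists>F G. F face_of A \<and> G face_of B \<and> H = psum F G" using FG by blast
  next
    assume "\<exists>F G. F face_of A \<and> G face_of B \<and> H = psum F G"
    then obtain F G where FG: "F face_of A" "G face_of B" "H = psum F G" by blast
    have "F \<times> G face_of A \<times> B" using FG face_of_Times by blast
    then have "LL ` (F \<times> G) face_of LL ` (A \<times> B)" using face_of_linear_image[OF linear_LL inj_LL] by blast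
    moreover have "LL ` (F \<times> G) = H \<times> {0}"
      using FG LL_img[of F G] A B face_of_imp_subset by (metis subset_trans)
    ultimately show "(H \<times> {0}) face_of LL ` (A \<times> B)" by simp
  qed
  finally show ?thesis .
qed

lemma ri_psum:
  assumes A: "A \<subseteq> RI S" and B: "B \<subseteq> RI T" and cA: "convex A" and cB: "convex B"
  shows "rel_interior (psum A B) = psum (rel_interior A) (rel_interior B)"
proof -
  have "rel_interior (psum A B \<times> {0::'e pt}) = rel_interior (psum A B) \<times> rel_interior {0::'e pt}"
    by (rule rel_interior_Times[OF convex_psum[OF cA cB] convex_singleton])
  then have "rel_interior (psum A B) \<times> {0::'e pt} = rel_interior (psum A B \<times> {0})" by simp
  also have "\<dots> = rel_interior (LL ` (A \<times> B))" using LL_img[OF A B] by simp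
  also have "\<dots> = LL ` rel_interior (A \<times> B)"
    using rel_interior_injective_linear_image[of LL] linear_LL inj_LL linear_conv_bounded_linear by blast
  also have "\<dots> = LL ` (rel_interior A \<times> rel_interior B)" using rel_interior_Times[OF cA cB] by simp
  also have "\<dots> = psum (rel_interior A) (rel_interior B) \<times> {0}"
    using LL_img A B rel_interior_subset by (metis subset_trans)
  finally show ?thesis by (metis fst_image_times insert_not_empty)
qed

end

lemma span_Times0:
  fixes X Y :: "('e::finite) pt set"
  assumes "0 \<in> X" "0 \<in> Y"
  shows "span (X \<times> Y) = span X \<times> span Y"
proof
  show "span (X \<times> Y) \<subseteq> span X \<times> span Y"
    by (intro span_minimal subspace_Times subspace_span) (auto intro: span_base)
  show "span X \<times> span Y \<subseteq> span (X \<times> Y)"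
  proof
    fix x assume "x \<in> span X \<times> span Y"
    then obtain u v where uv: "u \<in> span X" "v \<in> span Y" "x = (u, v)" by blast
    have l1: "linear (\<lambda>x::'e pt. (x, 0::'e pt))" by (rule linearI) auto
    have l2: "linear (\<lambda>x::'e pt. (0::'e pt, x))" by (rule linearI) auto
    have "(u, 0) \<in> span ((\<lambda>x. (x, 0::'e pt)) ` X)" using uv span_linear_image[OF l1, of X] by auto
    moreover have "(\<lambda>x. (x, 0::'e pt)) ` X \<subseteq> X \<times> Y" using assms by auto
    ultimately have 1: "(u, 0) \<in> span (X \<times> Y)" by (meson span_mono subsetD)
    have "(0, v) \<in> span ((\<lambda>x. (0::'e pt, x)) ` Y)" using uv span_linear_image[OF l2, of Y] by auto
    moreover have "(\<lambda>x. (0::'e pt, x)) ` Y \<subseteq> X \<times> Y" using assms by auto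
    ultimately have 2: "(0, v) \<in> span (X \<times> Y)" by (meson span_mono subsetD)
    have "x = (u, 0) + (0, v)" using uv by simp
    then show "x \<in> span (X \<times> Y)" using 1 2 span_add by metis
  qed
qed

lemma aff_dim_Times:
  fixes X Y :: "('e::finite) pt set"
  assumes "X \<noteq> {}" "Y \<noteq> {}"
  shows "aff_dim (X \<times> Y) = aff_dim X + aff_dim Y"
proof -
  obtain a b where ab: "a \<in> X" "b \<in> Y" using assms by blast
  define X' where "X' = (+) (-a) ` X"
  define Y' where "Y' = (+) (-b) ` Y"
  have 0: "0 \<in> X'" "0 \<in> Y'" using ab by (auto simp: X'_def Y'_def image_iff intro!: bexI[of _ a] bexI[of _ b])
  have "aff_dim X = int (dim X')" unfolding X'_def by (rule aff_dim_eq_dim) (use ab in \<open>auto intro: hull_inc\<close>)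
  moreover have "aff_dim Y = int (dim Y')" unfolding Y'_def by (rule aff_dim_eq_dim) (use ab in \<open>auto intro: hull_inc\<close>)
  moreover have "aff_dim (X \<times> Y) = int (dim ((+) (- (a, b)) ` (X \<times> Y)))"
    by (rule aff_dim_eq_dim) (use ab in \<open>auto intro: hull_inc\<close>)
  moreover have "(+) (- (a, b)) ` (X \<times> Y) = X' \<times> Y'"
    by (auto simp: X'_def Y'_def image_iff)
  moreover have "dim (X' \<times> Y') = dim X' + dim Y'"
  proof -
    have "dim (X' \<times> Y') = dim (span (X' \<times> Y'))" by simp
    also have "\<dots> = dim (span X' \<times> span Y')" using span_Times0[OF 0] by simp
    also have "\<dots> = dim (span X') + dim (span Y')" by (rule dim_Times) auto
    finally show ?thesis by simp
  qed
  ultimately show ?thesis by simp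
qed




lemma RI_diff: "x \<in> RI S \<Longrightarrow> y \<in> RI S \<Longrightarrow> x - y \<in> RI S" by (simp add: RI_def)

lemma lineality_sub:
  assumes "A \<subseteq> RI S" "A \<noteq> {}"
  shows "lineality A \<subseteq> RI S"
proof
  fix d assume d: "d \<in> lineality A"
  obtain x where x: "x \<in> A" using assms by blast
  have "\<forall>x\<in>A. \<forall>t. x + t *\<^sub>R d \<in> A" using d by (simp add: lineality_def)
  then have "x + 1 *\<^sub>R d \<in> A" using x by blast
  then have "(x + d) - x \<in> RI S" using x assms by (intro RI_diff) auto
  then show "d \<in> RI S" by simp
qed

lemma aff_dim_nonneg: "X \<noteq> {} \<Longrightarrow> aff_dim (X :: ('e::finite) pt set) \<ge> 0"
  using aff_dim_negative_iff[of X] by linarith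

context
  fixes S T :: "('e::finite) set"
  assumes disj: "S \<inter> T = {}"
begin

lemma pr_split: "x \<in> RI (S \<union> T) \<Longrightarrow> x = pr S x + pr T x"
  using disj by (auto simp: pr_def RI_def vec_eq_iff)

lemma aff_dim_psum:
  assumes A: "A \<subseteq> RI S" "A \<noteq> {}" and B: "B \<subseteq> RI T" "B \<noteq> {}"
  shows "aff_dim (psum A B) = aff_dim A + aff_dim B"
proof -
  have l1: "linear (\<lambda>x::'e pt. (x, 0::'e pt))" by (rule linearI) auto
  have i1: "inj (\<lambda>x::'e pt. (x, 0::'e pt))" by (rule injI) auto
  have "aff_dim (psum A B) = aff_dim ((\<lambda>x. (x, 0::'e pt)) ` psum A B)"
    using aff_dim_injective_linear_image[OF l1 i1] by simp
  also have "(\<lambda>x. (x, 0::'e pt)) ` psum A B = psum A B \<times> {0}" by auto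
  also have "\<dots> = LL S ` (A \<times> B)" using LL_img[OF disj A(1) B(1)] by simp
  also have "aff_dim \<dots> = aff_dim (A \<times> B)"
    using aff_dim_injective_linear_image[OF linear_LL[OF disj] inj_LL[OF disj]] by simp
  also have "\<dots> = aff_dim A + aff_dim B" using aff_dim_Times A B by blast
  finally show ?thesis .
qed

lemma dimension_psum:
  assumes A: "A \<subseteq> RI S" "A \<noteq> {}" and B: "B \<subseteq> RI T" "B \<noteq> {}"
  shows "dimension (psum A B) = dimension A + dimension B"
  using aff_dim_psum[OF A B] aff_dim_nonneg[OF A(2)] aff_dim_nonneg[OF B(2)]
  by (simp add: dimension_def nat_add_distrib)

lemma lin_psum1: "d1 \<in> lineality A \<Longrightarrow> d2 \<in> lineality B \<Longrightarrow> d1 + d2 \<in> lineality (psum A B)"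
proof -
  assume d: "d1 \<in> lineality A" "d2 \<in> lineality B"
  show "d1 + d2 \<in> lineality (psum A B)"
  proof (unfold lineality_def, intro CollectI ballI allI)
    fix x t assume "x \<in> psum A B"
    then obtain p q where pq: "p \<in> A" "q \<in> B" "x = p + q" by (auto simp: psum_def)
    have "p + t *\<^sub>R d1 \<in> A" "q + t *\<^sub>R d2 \<in> B" using d pq by (auto simp: lineality_def)
    moreover have "x + t *\<^sub>R (d1 + d2) = (p + t *\<^sub>R d1) + (q + t *\<^sub>R d2)"
      using pq by (simp add: algebra_simps)
    ultimately show "x + t *\<^sub>R (d1 + d2) \<in> psum A B" unfolding psum_def by blast
  qed
qed

lemma lin_psum2:
  assumes A: "A \<subseteq> RI S" and B: "B \<subseteq> RI T" "B \<noteq> {}" and d: "d \<in> lineality (psum A B)"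
  shows "pr S d \<in> lineality A"
proof (unfold lineality_def, intro CollectI ballI allI)
  fix x t assume x: "x \<in> A"
  obtain y where y: "y \<in> B" using B by blast
  have "x + y \<in> psum A B" using x y by (auto simp: psum_def)
  then have "(x + y) + t *\<^sub>R d \<in> psum A B" using d by (simp add: lineality_def)
  then obtain p q where pq: "p \<in> A" "q \<in> B" "(x + y) + t *\<^sub>R d = p + q" by (auto simp: psum_def)
  have "pr S ((x + y) + t *\<^sub>R d) = x + t *\<^sub>R pr S d"
    using x y A B pr_sum1[OF disj] by (simp add: pr_add pr_scale subset_iff)
  moreover have "pr S (p + q) = p" using pq A B pr_sum1[OF disj] by (auto simp: subset_iff)
  ultimately show "x + t *\<^sub>R pr S d \<in> A" using pq by simp
qed

lemma lin_psum3:
  assumes A: "A \<subseteq> RI S" "A \<noteq> {}" and B: "B \<subseteq> RI T" and d: "d \<in> lineality (psum A B)"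
  shows "pr T d \<in> lineality B"
proof (unfold lineality_def, intro CollectI ballI allI)
  fix y t assume y: "y \<in> B"
  obtain x where x: "x \<in> A" using A by blast
  have "x + y \<in> psum A B" using x y by (auto simp: psum_def)
  then have "(x + y) + t *\<^sub>R d \<in> psum A B" using d by (simp add: lineality_def)
  then obtain p q where pq: "p \<in> A" "q \<in> B" "(x + y) + t *\<^sub>R d = p + q" by (auto simp: psum_def)
  have "pr T ((x + y) + t *\<^sub>R d) = y + t *\<^sub>R pr T d"
    using x y A B pr_sum2[OF disj] by (simp add: pr_add pr_scale subset_iff)
  moreover have "pr T (p + q) = q" using pq A B pr_sum2[OF disj] by (auto simp: subset_iff)
  ultimately show "y + t *\<^sub>R pr T d \<in> B" using pq by simp
qed

lemma rb_bounded_psum: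
  assumes P: "P \<subseteq> RI S" and Q: "Q \<subseteq> RI T" and F: "F \<subseteq> P" "F \<noteq> {}" and G: "G \<subseteq> Q" "G \<noteq> {}"
  shows "(\<exists>B. bounded B \<and> psum F G \<subseteq> {b + l | b l. b \<in> B \<and> l \<in> lineality (psum P Q)}) \<longleftrightarrow>
         (\<exists>B. bounded B \<and> F \<subseteq> {b + l | b l. b \<in> B \<and> l \<in> lineality P}) \<and>
         (\<exists>B. bounded B \<and> G \<subseteq> {b + l | b l. b \<in> B \<and> l \<in> lineality Q})"
proof
  assume "\<exists>B. bounded B \<and> psum F G \<subseteq> {b + l | b l. b \<in> B \<and> l \<in> lineality (psum P Q)}"
  then obtain B where B: "bounded B" "psum F G \<subseteq> {b + l | b l. b \<in> B \<and> l \<in> lineality (psum P Q)}" by blast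
  obtain f0 g0 where f0: "f0 \<in> F" and g0: "g0 \<in> G" using F G by blast
  have "F \<subseteq> {b + l | b l. b \<in> pr S ` B \<and> l \<in> lineality P}"
  proof
    fix f assume f: "f \<in> F"
    then have "f + g0 \<in> psum F G" using g0 by (auto simp: psum_def)
    then obtain b l where bl: "b \<in> B" "l \<in> lineality (psum P Q)" "f + g0 = b + l" using B by blast
    have "pr S (f + g0) = f" using f g0 F G P Q pr_sum1[OF disj] by (auto simp: subset_iff)
    then have "f = pr S b + pr S l" using bl by (simp add: pr_add)
    moreover have "pr S l \<in> lineality P" using lin_psum2[OF P Q] bl G F by blast
    ultimately show "f \<in> {b + l | b l. b \<in> pr S ` B \<and> l \<in> lineality P}" using bl by blast
  qed
  moreover have "G \<subseteq> {b + l | b l. b \<in> pr T ` B \<and> l \<in> lineality Q}"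
  proof
    fix g assume g: "g \<in> G"
    then have "f0 + g \<in> psum F G" using f0 by (auto simp: psum_def)
    then obtain b l where bl: "b \<in> B" "l \<in> lineality (psum P Q)" "f0 + g = b + l" using B by blast
    have "pr T (f0 + g) = g" using f0 g F G P Q pr_sum2[OF disj] by (auto simp: subset_iff)
    then have "g = pr T b + pr T l" using bl by (simp add: pr_add)
    moreover have "pr T l \<in> lineality Q" using lin_psum3[OF P _ Q] bl G F by blast
    ultimately show "g \<in> {b + l | b l. b \<in> pr T ` B \<and> l \<in> lineality Q}" using bl by blast
  qed
  moreover have "bounded (pr S ` B)" "bounded (pr T ` B)"
    using B(1) bounded_linear_image bounded_linear_pr by blast+
  ultimately show "(\<exists>B. bounded B \<and> F \<subseteq> {b + l | b l. b \<in> B \<and> l \<in> lineality P}) \<and>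
         (\<exists>B. bounded B \<and> G \<subseteq> {b + l | b l. b \<in> B \<and> l \<in> lineality Q})" by blast
next
  assume "(\<exists>B. bounded B \<and> F \<subseteq> {b + l | b l. b \<in> B \<and> l \<in> lineality P}) \<and>
         (\<exists>B. bounded B \<and> G \<subseteq> {b + l | b l. b \<in> B \<and> l \<in> lineality Q})"
  then obtain B1 B2 where B1: "bounded B1" "F \<subseteq> {b + l | b l. b \<in> B1 \<and> l \<in> lineality P}"
    and B2: "bounded B2" "G \<subseteq> {b + l | b l. b \<in> B2 \<and> l \<in> lineality Q}" by blast
  have "bounded (\<Union>x\<in> B1. \<Union>y \<in> B2. {x + y})" using B1 B2 bounded_sums by blast
  moreover have "psum F G \<subseteq> {b + l | b l. b \<in> (\<Union>x\<in> B1. \<Union>y \<in> B2. {x + y}) \<and> l \<in> lineality (psum P Q)}"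
  proof
    fix x assume "x \<in> psum F G"
    then obtain f g where fg: "f \<in> F" "g \<in> G" "x = f + g" by (auto simp: psum_def)
    obtain b1 l1 where 1: "b1 \<in> B1" "l1 \<in> lineality P" "f = b1 + l1" using B1 fg by blast
    obtain b2 l2 where 2: "b2 \<in> B2" "l2 \<in> lineality Q" "g = b2 + l2" using B2 fg by blast
    have "x = (b1 + b2) + (l1 + l2)" using fg 1 2 by (simp add: algebra_simps)
    moreover have "l1 + l2 \<in> lineality (psum P Q)" using lin_psum1 1 2 by blast
    moreover have "b1 + b2 \<in> (\<Union>x\<in> B1. \<Union>y \<in> B2. {x + y})" using 1 2 by blast
    ultimately show "x \<in> {b + l | b l. b \<in> (\<Union>x\<in> B1. \<Union>y \<in> B2. {x + y}) \<and> l \<in> lineality (psum P Q)}" by blast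
  qed
  ultimately show "\<exists>B. bounded B \<and> psum F G \<subseteq> {b + l | b l. b \<in> B \<and> l \<in> lineality (psum P Q)}" by blast
qed

lemma tangent_psum:
  assumes X: "X \<subseteq> RI S" and Y: "Y \<subseteq> RI T" and f: "f \<in> X" and g: "g \<in> Y"
  shows "tangent_cone (psum X Y) (f + g) = psum (tangent_cone X f) (tangent_cone Y g)"
proof
  show "tangent_cone (psum X Y) (f + g) \<subseteq> psum (tangent_cone X f) (tangent_cone Y g)"
  proof
    fix y assume "y \<in> tangent_cone (psum X Y) (f + g)"
    then obtain x e where y: "y = f + g + x" and e: "e > 0"
      and h: "\<And>\<epsilon>. 0 < \<epsilon> \<Longrightarrow> \<epsilon> < e \<Longrightarrow> f + g + \<epsilon> *\<^sub>R x \<in> psum X Y"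
      unfolding tangent_cone_def by blast
    have fR: "f \<in> RI S" and gR: "g \<in> RI T" using f g X Y by auto
    have fgR: "f + g \<in> RI (S \<union> T)" using fR gR by (intro RI_add) (auto intro: RI_mono)
    have "f + g + (e/2) *\<^sub>R x \<in> RI (S \<union> T)" using h[of "e/2"] e psum_RI[OF disj X Y] by auto
    then have "(f + g + (e/2) *\<^sub>R x) - (f + g) \<in> RI (S \<union> T)" using fgR by (rule RI_diff)
    then have "(2/e) *\<^sub>R ((e/2) *\<^sub>R x) \<in> RI (S \<union> T)" by (simp only: add_diff_cancel_left' RI_scale)
    moreover have "(2/e) *\<^sub>R ((e/2) *\<^sub>R x) = x" using e by simp
    ultimately have xR: "x \<in> RI (S \<union> T)" by simp
    have decomp: "f + \<epsilon> *\<^sub>R pr S x \<in> X \<and> g + \<epsilon> *\<^sub>R pr T x \<in> Y" if eps: "0 < \<epsilon>" "\<epsilon> < e" for \<epsilon>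
    proof -
      obtain p q where pq: "p \<in> X" "q \<in> Y" "f + g + \<epsilon> *\<^sub>R x = p + q"
        using h[OF eps] by (auto simp: psum_def)
      have pR: "p \<in> RI S" and qR: "q \<in> RI T" using pq X Y by auto
      have "pr S (f + g + \<epsilon> *\<^sub>R x) = f + \<epsilon> *\<^sub>R pr S x"
        using pr_sum1[OF disj fR gR] by (simp add: pr_add pr_scale)
      moreover have "pr S (p + q) = p" using pr_sum1[OF disj pR qR] .
      moreover have "pr T (f + g + \<epsilon> *\<^sub>R x) = g + \<epsilon> *\<^sub>R pr T x"
        using pr_sum2[OF disj fR gR] by (simp add: pr_add pr_scale)
      moreover have "pr T (p + q) = q" using pr_sum2[OF disj pR qR] .
      ultimately show ?thesis using pq by metis
    qed
    have "f + pr S x \<in> tangent_cone X f"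
      unfolding tangent_cone_def using e decomp by blast
    moreover have "g + pr T x \<in> tangent_cone Y g"
      unfolding tangent_cone_def using e decomp by blast
    moreover have "y = (f + pr S x) + (g + pr T x)"
      using y pr_split[OF xR] by (simp add: algebra_simps)
    ultimately show "y \<in> psum (tangent_cone X f) (tangent_cone Y g)" unfolding psum_def by blast
  qed
next
  show "psum (tangent_cone X f) (tangent_cone Y g) \<subseteq> tangent_cone (psum X Y) (f + g)"
  proof
    fix y assume "y \<in> psum (tangent_cone X f) (tangent_cone Y g)"
    then obtain x1 x2 e1 e2 where y: "y = (f + x1) + (g + x2)" and e: "e1 > 0" "e2 > 0"
      and h1: "\<And>\<epsilon>. 0 < \<epsilon> \<and> \<epsilon> < e1 \<longrightarrow> f + \<epsilon> *\<^sub>R x1 \<in> X"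
      and h2: "\<And>\<epsilon>. 0 < \<epsilon> \<and> \<epsilon> < e2 \<longrightarrow> g + \<epsilon> *\<^sub>R x2 \<in> Y"
      unfolding psum_def tangent_cone_def by blast
    have "f + g + \<epsilon> *\<^sub>R (x1 + x2) \<in> psum X Y" if "0 < \<epsilon>" "\<epsilon> < min e1 e2" for \<epsilon>
    proof -
      have "f + \<epsilon> *\<^sub>R x1 \<in> X" "g + \<epsilon> *\<^sub>R x2 \<in> Y" using h1 h2 that by auto
      moreover have "f + g + \<epsilon> *\<^sub>R (x1 + x2) = (f + \<epsilon> *\<^sub>R x1) + (g + \<epsilon> *\<^sub>R x2)"
        by (simp add: algebra_simps)
      ultimately show ?thesis unfolding psum_def by blast
    qed
    moreover have "y = (f + g) + (x1 + x2)" using y by (simp add: algebra_simps)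
    moreover have "min e1 e2 > 0" using e by simp
    ultimately show "y \<in> tangent_cone (psum X Y) (f + g)"
      unfolding tangent_cone_def by blast
  qed
qed

end




lemma sum_delta_in:
  fixes X :: "'a \<Rightarrow> 'k::comm_monoid_add"
  assumes "finite K" "c \<in> K"
  shows "(\<Sum>C\<in>K. if C = c then X C else 0) = X c"
  using assms by (simp add: sum.delta')

lemma double_delta:
  fixes u :: "'a \<Rightarrow> 'k::comm_ring_1" and v :: "'b \<Rightarrow> 'k"
  assumes fin: "finite K1" "finite K2" "finite A" "finite B"
    and mem: "\<And>a. a \<in> A \<Longrightarrow> \<phi> a \<in> K1" "\<And>b. b \<in> B \<Longrightarrow> \<psi> b \<in> K2"
  shows "(\<Sum>C1\<in>K1. \<Sum>C2\<in>K2. if W C1 C2 then (\<Sum>a\<in>A. if \<phi> a = C1 then u a else 0) * (\<Sum>b\<in>B. if \<psi> b = C2 then v b else 0) else 0)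
       = (\<Sum>a\<in>A. \<Sum>b\<in>B. if W (\<phi> a) (\<psi> b) then u a * v b else 0)"
proof -
  have step1: "(if W C1 C2 then (\<Sum>a\<in>A. if \<phi> a = C1 then u a else 0) * (\<Sum>b\<in>B. if \<psi> b = C2 then v b else 0) else 0)
     = (\<Sum>a\<in>A. \<Sum>b\<in>B. if C1 = \<phi> a then (if C2 = \<psi> b then (if W C1 C2 then u a * v b else 0) else 0) else 0)" for C1 C2
  proof (cases "W C1 C2")
    case True then show ?thesis by (auto simp: sum_product intro!: sum.cong)
  next
    case False
    then have "\<forall>a\<in>A. \<forall>b\<in>B. (if C1 = \<phi> a then (if C2 = \<psi> b then (if W C1 C2 then u a * v b else 0) else 0) else 0) = 0"
      by auto
    then show ?thesis using False by simp
  qed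
  have "(\<Sum>C1\<in>K1. \<Sum>C2\<in>K2. if W C1 C2 then (\<Sum>a\<in>A. if \<phi> a = C1 then u a else 0) * (\<Sum>b\<in>B. if \<psi> b = C2 then v b else 0) else 0)
      = (\<Sum>C1\<in>K1. \<Sum>C2\<in>K2. \<Sum>a\<in>A. \<Sum>b\<in>B. if C1 = \<phi> a then (if C2 = \<psi> b then (if W C1 C2 then u a * v b else 0) else 0) else 0)"
    by (simp only: step1)
  also have "\<dots> = (\<Sum>C1\<in>K1. \<Sum>a\<in>A. \<Sum>C2\<in>K2. \<Sum>b\<in>B. if C1 = \<phi> a then (if C2 = \<psi> b then (if W C1 C2 then u a * v b else 0) else 0) else 0)"
    by (rule sum.cong[OF refl], rule sum.swap)
  also have "\<dots> = (\<Sum>C1\<in>K1. \<Sum>a\<in>A. \<Sum>b\<in>B. \<Sum>C2\<in>K2. if C1 = \<phi> a then (if C2 = \<psi> b then (if W C1 C2 then u a * v b else 0) else 0) else 0)"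
    by (rule sum.cong[OF refl], rule sum.cong[OF refl], rule sum.swap)
  also have "\<dots> = (\<Sum>a\<in>A. \<Sum>C1\<in>K1. \<Sum>b\<in>B. \<Sum>C2\<in>K2. if C1 = \<phi> a then (if C2 = \<psi> b then (if W C1 C2 then u a * v b else 0) else 0) else 0)"
    by (rule sum.swap)
  also have "\<dots> = (\<Sum>a\<in>A. \<Sum>b\<in>B. \<Sum>C1\<in>K1. \<Sum>C2\<in>K2. if C1 = \<phi> a then (if C2 = \<psi> b then (if W C1 C2 then u a * v b else 0) else 0) else 0)"
    by (rule sum.cong[OF refl], rule sum.swap)
  also have "\<dots> = (\<Sum>a\<in>A. \<Sum>b\<in>B. if W (\<phi> a) (\<psi> b) then u a * v b else 0)"
  proof (intro sum.cong refl)
    fix a b assume ab: "a \<in> A" "b \<in> B"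
    have "(\<Sum>C1\<in>K1. \<Sum>C2\<in>K2. if C1 = \<phi> a then (if C2 = \<psi> b then (if W C1 C2 then u a * v b else 0) else 0) else 0)
        = (\<Sum>C1\<in>K1. if C1 = \<phi> a then (\<Sum>C2\<in>K2. if C2 = \<psi> b then (if W C1 C2 then u a * v b else 0) else 0) else 0)"
      by (intro sum.cong refl) auto
    also have "\<dots> = (\<Sum>C2\<in>K2. if C2 = \<psi> b then (if W (\<phi> a) C2 then u a * v b else 0) else 0)"
      by (rule sum_delta_in[OF fin(1) mem(1)[OF ab(1)], where X="\<lambda>C1. \<Sum>C2\<in>K2. if C2 = \<psi> b then (if W C1 C2 then u a * v b else 0) else 0"])
    also have "\<dots> = (if W (\<phi> a) (\<psi> b) then u a * v b else 0)"
      by (rule sum_delta_in[OF fin(2) mem(2)[OF ab(2)], where X="\<lambda>C2. if W (\<phi> a) C2 then u a * v b else 0"])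
    finally show "(\<Sum>C1\<in>K1. \<Sum>C2\<in>K2. if C1 = \<phi> a then (if C2 = \<psi> b then (if W C1 C2 then u a * v b else 0) else 0) else 0)
        = (if W (\<phi> a) (\<psi> b) then u a * v b else 0)" .
  qed
  finally show ?thesis .
qed

lemma sum_collect:
  fixes w :: "'a \<Rightarrow> 'b \<Rightarrow> 'k::comm_ring_1"
  assumes "finite M" "\<And>P Q. P \<in> A \<Longrightarrow> Q \<in> B \<Longrightarrow> g P Q \<in> M"
  shows "(\<Sum>X\<in>M. (\<Sum>P\<in>A. \<Sum>Q\<in>B. if g P Q = X then w P Q else 0) * \<phi> X) = (\<Sum>P\<in>A. \<Sum>Q\<in>B. w P Q * \<phi> (g P Q))"
proof -
  have "(\<Sum>X\<in>M. (\<Sum>P\<in>A. \<Sum>Q\<in>B. if g P Q = X then w P Q else 0) * \<phi> X)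
      = (\<Sum>X\<in>M. \<Sum>P\<in>A. \<Sum>Q\<in>B. if X = g P Q then w P Q * \<phi> X else 0)"
    by (auto simp: sum_distrib_right intro!: sum.cong)
  also have "\<dots> = (\<Sum>P\<in>A. \<Sum>Q\<in>B. \<Sum>X\<in>M. if X = g P Q then w P Q * \<phi> X else 0)"
    by (rule trans[OF sum.swap], rule sum.cong[OF refl], rule sum.swap)
  also have "\<dots> = (\<Sum>P\<in>A. \<Sum>Q\<in>B. w P Q * \<phi> (g P Q))"
    using assms by (intro sum.cong refl) (simp add: sum.delta')
  finally show ?thesis .
qed

definition Fs :: "('e::finite) poly \<Rightarrow> 'e poly set" where
  "Fs P = {F. F face_of P \<and> F \<noteq> {} \<and> rel_bounded_face P F}"

lemma finite_Fs: "P \<in> GP I \<Longrightarrow> finite (Fs P)"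
  using finite_faces_gp[of P I] by (rule rev_finite_subset) (auto simp: Fs_def)

lemma bg_basis_alt:
  assumes "finite (Fs P)"
  shows "bg_basis P C = (\<Sum>F\<in>Fs P. if face_cone P F = C then (-1) ^ dimension F else 0)"
proof -
  have "{F. F face_of P \<and> F \<noteq> {} \<and> rel_bounded_face P F \<and> face_cone P F = C} = {F \<in> Fs P. face_cone P F = C}"
    by (auto simp: Fs_def)
  then show ?thesis unfolding bg_basis_def using assms by (simp add: sum.inter_filter)
qed

lemma GP_sub: "P \<in> GP I \<Longrightarrow> P \<subseteq> RI I"
  by (auto simp: GP_def gp_of_def)

lemma GP_convex: "P \<in> GP I \<Longrightarrow> convex P"
  by (metis GP_E polyhedron_gp polyhedron_imp_convex)

lemma face_cone_GP: "P \<in> GP I \<Longrightarrow> F face_of P \<Longrightarrow> F \<noteq> {} \<Longrightarrow> face_cone P F \<in> GP I"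
  using conj1 by (auto simp: CGP_def)

lemma face_cone_ne: "P \<in> GP I \<Longrightarrow> F face_of P \<Longrightarrow> F \<noteq> {} \<Longrightarrow> face_cone P F \<noteq> {}" for P :: "('e::finite) poly"
proof -
  assume P: "P \<in> GP I" and F: "F face_of P" "F \<noteq> {}"
  obtain z where z: "ext_submodular I z" "P = gp_of I z" using P GP_E by blast
  define f where "f = (SOME f. f \<in> rel_interior F)"
  have "f \<in> P" unfolding f_def using some_ri[OF F] rel_interior_subset face_of_imp_subset[OF F(1)] by blast
  then have "\<exists>e>0. \<forall>\<epsilon>. 0 < \<epsilon> \<and> \<epsilon> < e \<longrightarrow> f + \<epsilon> *\<^sub>R (0::'e pt) \<in> P"
    by (intro exI[of _ 1]) auto
  then have "f + 0 \<in> tangent_cone P f" unfolding tangent_cone_def by blast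
  then show ?thesis unfolding face_cone_def f_def[symmetric] by auto
qed

context
  fixes S T :: "('e::finite) set"
  assumes disj: "S \<inter> T = {}"
begin

lemma face_cone_psum:
  assumes P: "P \<in> GP S" and Q: "Q \<in> GP T" and F: "F face_of P" "F \<noteq> {}" and G: "G face_of Q" "G \<noteq> {}"
  shows "face_cone (psum P Q) (psum F G) = psum (face_cone P F) (face_cone Q G)"
proof -
  obtain z1 where z1: "ext_submodular S z1" "P = gp_of S z1" using P GP_E by blast
  obtain z2 where z2: "ext_submodular T z2" "Q = gp_of T z2" using Q GP_E by blast
  have FP: "F \<subseteq> P" and GQ: "G \<subseteq> Q" using F G face_of_imp_subset by auto
  have FR: "F \<subseteq> RI S" and GR: "G \<subseteq> RI T" using FP GQ GP_sub P Q by blast+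
  have cF: "convex F" "convex G" using F G face_of_imp_convex by auto
  define h where "h = (SOME h. h \<in> rel_interior (psum F G))"
  have "psum F G face_of psum P Q" using faces_psum[OF disj GP_sub[OF P] GP_sub[OF Q]] F G by blast
  moreover have "psum F G \<noteq> {}" using F G by (auto simp: psum_def)
  ultimately have "h \<in> rel_interior (psum F G)" unfolding h_def by (rule some_ri)
  then obtain f g where fg: "f \<in> rel_interior F" "g \<in> rel_interior G" "h = f + g"
    using ri_psum[OF disj FR GR cF] by (auto simp: psum_def)
  have fP: "f \<in> P" and gQ: "g \<in> Q" using fg FP GQ rel_interior_subset by blast+
  have "face_cone (psum P Q) (psum F G) = tangent_cone (psum P Q) (f + g)"
    unfolding face_cone_def h_def[symmetric] fg(3) ..
  also have "\<dots> = psum (tangent_cone P f) (tangent_cone Q g)"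
    by (rule tangent_psum[OF disj GP_sub[OF P] GP_sub[OF Q] fP gQ])
  also have "tangent_cone P f = face_cone P F"
    using tangent_ri_eq[OF z1(1)] face_cone_gp[OF z1(1)] FP fg F z1(2) by metis
  also have "tangent_cone Q g = face_cone Q G"
    using tangent_ri_eq[OF z2(1)] face_cone_gp[OF z2(1)] GQ fg G z2(2) by metis
  finally show ?thesis .
qed

lemma Fs_psum:
  assumes P: "P \<in> GP S" and Q: "Q \<in> GP T"
  shows "Fs (psum P Q) = (\<lambda>(F, G). psum F G) ` (Fs P \<times> Fs Q)"
proof -
  have PR: "P \<subseteq> RI S" and QR: "Q \<subseteq> RI T" using P Q GP_sub by auto
  have rb: "rel_bounded_face (psum P Q) (psum F G) \<longleftrightarrow> rel_bounded_face P F \<and> rel_bounded_face Q G"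
    if F: "F face_of P" "F \<noteq> {}" and G: "G face_of Q" "G \<noteq> {}" for F G
  proof -
    have "psum F G face_of psum P Q" using faces_psum[OF disj PR QR] F G by blast
    then show ?thesis unfolding rel_bounded_face_def
      using rb_bounded_psum[OF disj PR QR face_of_imp_subset[OF F(1)] F(2) face_of_imp_subset[OF G(1)] G(2)] F G
      by blast
  qed
  show ?thesis
  proof
    show "Fs (psum P Q) \<subseteq> (\<lambda>(F, G). psum F G) ` (Fs P \<times> Fs Q)"
    proof
      fix H assume H: "H \<in> Fs (psum P Q)"
      then obtain F G where FG: "F face_of P" "G face_of Q" "H = psum F G"
        using faces_psum[OF disj PR QR] by (auto simp: Fs_def)
      have ne: "F \<noteq> {}" "G \<noteq> {}" using H FG by (auto simp: Fs_def psum_def)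
      then have "rel_bounded_face P F \<and> rel_bounded_face Q G" using rb[OF FG(1) ne(1) FG(2) ne(2)] H FG by (simp add: Fs_def)
      then show "H \<in> (\<lambda>(F, G). psum F G) ` (Fs P \<times> Fs Q)" using FG ne by (auto simp: Fs_def)
    qed
    show "(\<lambda>(F, G). psum F G) ` (Fs P \<times> Fs Q) \<subseteq> Fs (psum P Q)"
    proof
      fix H assume "H \<in> (\<lambda>(F, G). psum F G) ` (Fs P \<times> Fs Q)"
      then obtain F G where FG: "F \<in> Fs P" "G \<in> Fs Q" "H = psum F G" by auto
      then have "F face_of P" "F \<noteq> {}" "G face_of Q" "G \<noteq> {}" by (auto simp: Fs_def)
      moreover have "H \<noteq> {}" using FG by (auto simp: Fs_def psum_def)
      ultimately show "H \<in> Fs (psum P Q)" using FG rb faces_psum[OF disj PR QR] by (auto simp: Fs_def)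
    qed
  qed
qed

lemma inj_Fs:
  assumes P: "P \<in> GP S" and Q: "Q \<in> GP T"
  shows "inj_on (\<lambda>(F, G). psum F G) (Fs P \<times> Fs Q)"
proof (rule inj_onI, clarify)
  fix F G F' G' assume a: "F \<in> Fs P" "G \<in> Fs Q" "F' \<in> Fs P" "G' \<in> Fs Q" "psum F G = psum F' G'"
  have PR: "P \<subseteq> RI S" "Q \<subseteq> RI T" using P Q GP_sub by auto
  have "F \<subseteq> P" "F' \<subseteq> P" "G \<subseteq> Q" "G' \<subseteq> Q" "F \<noteq> {}" "F' \<noteq> {}" "G \<noteq> {}" "G' \<noteq> {}"
    using a face_of_imp_subset unfolding Fs_def by auto
  then have "F \<subseteq> RI S" "F' \<subseteq> RI S" "G \<subseteq> RI T" "G' \<subseteq> RI T" "F \<noteq> {}" "F' \<noteq> {}" "G \<noteq> {}" "G' \<noteq> {}"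
    using PR by auto
  then show "F = F' \<and> G = G'" using psum_inj[OF disj] a(5) by blast
qed

lemma mult_key:
  fixes R :: "'e poly"
  assumes P: "P \<in> GP S" and Q: "Q \<in> GP T" and K: "finite K1" "finite K2"
    and K1: "\<And>F. F \<in> Fs P \<Longrightarrow> face_cone P F \<in> K1" and K2: "\<And>G. G \<in> Fs Q \<Longrightarrow> face_cone Q G \<in> K2"
  shows "(bg_basis (psum P Q) R :: 'k::comm_ring_1) =
    (\<Sum>C1\<in>K1. \<Sum>C2\<in>K2. if psum C1 C2 = R then bg_basis P C1 * bg_basis Q C2 else 0)"
proof -
  have fP: "finite (Fs P)" and fQ: "finite (Fs Q)" using finite_Fs P Q by auto
  have PR: "P \<subseteq> RI S" and QR: "Q \<subseteq> RI T" using P Q GP_sub by auto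
  have fPQ: "finite (Fs (psum P Q))" using Fs_psum[OF P Q] fP fQ by simp
  have "(\<Sum>C1\<in>K1. \<Sum>C2\<in>K2. if psum C1 C2 = R then bg_basis P C1 * bg_basis Q C2 else (0::'k))
    = (\<Sum>C1\<in>K1. \<Sum>C2\<in>K2. if psum C1 C2 = R then
        (\<Sum>F\<in>Fs P. if face_cone P F = C1 then (-1) ^ dimension F else 0) *
        (\<Sum>G\<in>Fs Q. if face_cone Q G = C2 then (-1) ^ dimension G else 0) else 0)"
    by (simp only: bg_basis_alt[OF fP] bg_basis_alt[OF fQ])
  also have "\<dots> = (\<Sum>F\<in>Fs P. \<Sum>G\<in>Fs Q. if psum (face_cone P F) (face_cone Q G) = R
        then (-1) ^ dimension F * (-1) ^ dimension G else (0::'k))"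
    by (rule double_delta[OF K fP fQ K1 K2])
  also have "\<dots> = (\<Sum>(F, G)\<in>Fs P \<times> Fs Q. if psum (face_cone P F) (face_cone Q G) = R
        then (-1) ^ dimension F * (-1) ^ dimension G else (0::'k))"
    by (simp add: sum.cartesian_product)
  also have "\<dots> = (\<Sum>(F, G)\<in>Fs P \<times> Fs Q. if face_cone (psum P Q) (psum F G) = R
        then (-1) ^ dimension (psum F G) else (0::'k))"
  proof (intro sum.cong refl, clarify)
    fix F G assume F: "F \<in> Fs P" and G: "G \<in> Fs Q"
    then have F': "F face_of P" "F \<noteq> {}" and G': "G face_of Q" "G \<noteq> {}" by (auto simp: Fs_def)
    have "face_cone (psum P Q) (psum F G) = psum (face_cone P F) (face_cone Q G)"
      by (rule face_cone_psum[OF P Q F' G'])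
    moreover have "dimension (psum F G) = dimension F + dimension G"
      proof -
      have "F \<subseteq> RI S" "G \<subseteq> RI T" using F' G' face_of_imp_subset PR QR by blast+
      then show ?thesis using dimension_psum[OF disj] F' G' by blast
    qed
    ultimately show "(if psum (face_cone P F) (face_cone Q G) = R then (-1) ^ dimension F * (-1) ^ dimension G else (0::'k))
      = (if face_cone (psum P Q) (psum F G) = R then (-1) ^ dimension (psum F G) else 0)"
      by (simp add: power_add)
  qed
  also have "\<dots> = (\<Sum>H\<in>Fs (psum P Q). if face_cone (psum P Q) H = R then (-1) ^ dimension H else (0::'k))"
    unfolding Fs_psum[OF P Q] by (subst sum.reindex[OF inj_Fs[OF P Q]]) (simp add: case_prod_unfold)
  also have "\<dots> = bg_basis (psum P Q) R" by (simp add: bg_basis_alt[OF fPQ])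
  finally show ?thesis by simp
qed

end




lemma bilin_swap:
  fixes x :: "'a \<Rightarrow> 'k::comm_ring_1" and y :: "'b \<Rightarrow> 'k"
  shows "(\<Sum>C1\<in>K1. \<Sum>C2\<in>K2. if W C1 C2 then (\<Sum>P\<in>A. x P * f P C1) * (\<Sum>Q\<in>B. y Q * g Q C2) else 0)
    = (\<Sum>P\<in>A. \<Sum>Q\<in>B. x P * y Q * (\<Sum>C1\<in>K1. \<Sum>C2\<in>K2. if W C1 C2 then f P C1 * g Q C2 else 0))"
proof -
  define X where "X = (\<lambda>C1 C2 P Q. if W C1 C2 then x P * y Q * (f P C1 * g Q C2) else 0)"
  have step1: "(if W C1 C2 then (\<Sum>P\<in>A. x P * f P C1) * (\<Sum>Q\<in>B. y Q * g Q C2) else 0)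
     = (\<Sum>P\<in>A. \<Sum>Q\<in>B. X C1 C2 P Q)" for C1 C2
  proof (cases "W C1 C2")
    case True then show ?thesis by (auto simp: X_def sum_product intro!: sum.cong simp: algebra_simps)
  qed (simp add: X_def)
  have "(\<Sum>C1\<in>K1. \<Sum>C2\<in>K2. if W C1 C2 then (\<Sum>P\<in>A. x P * f P C1) * (\<Sum>Q\<in>B. y Q * g Q C2) else 0)
      = (\<Sum>C1\<in>K1. \<Sum>C2\<in>K2. \<Sum>P\<in>A. \<Sum>Q\<in>B. X C1 C2 P Q)"
    by (simp only: step1)
  also have "\<dots> = (\<Sum>C1\<in>K1. \<Sum>P\<in>A. \<Sum>C2\<in>K2. \<Sum>Q\<in>B. X C1 C2 P Q)"
    by (rule sum.cong[OF refl], rule sum.swap)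
  also have "\<dots> = (\<Sum>C1\<in>K1. \<Sum>P\<in>A. \<Sum>Q\<in>B. \<Sum>C2\<in>K2. X C1 C2 P Q)"
    by (rule sum.cong[OF refl], rule sum.cong[OF refl], rule sum.swap)
  also have "\<dots> = (\<Sum>P\<in>A. \<Sum>C1\<in>K1. \<Sum>Q\<in>B. \<Sum>C2\<in>K2. X C1 C2 P Q)"
    by (rule sum.swap)
  also have "\<dots> = (\<Sum>P\<in>A. \<Sum>Q\<in>B. \<Sum>C1\<in>K1. \<Sum>C2\<in>K2. X C1 C2 P Q)"
    by (rule sum.cong[OF refl], rule sum.swap)
  also have "\<dots> = (\<Sum>P\<in>A. \<Sum>Q\<in>B. x P * y Q * (\<Sum>C1\<in>K1. \<Sum>C2\<in>K2. if W C1 C2 then f P C1 * g Q C2 else 0))"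
    by (simp add: X_def sum_distrib_left if_distrib cong: if_cong)
  finally show ?thesis .
qed

lemma supp_bg_K:
  fixes c :: "('e::finite) poly \<Rightarrow> 'k::comm_ring_1"
  assumes "supp c \<subseteq> GP I"
  shows "supp (bg c) \<subseteq> (\<Union>P\<in>supp c. face_cone P ` Fs P)"
proof -
  have "supp (bg c) \<subseteq> (\<Union>P\<in>supp c. supp (bg_basis P :: _ \<Rightarrow> 'k))"
    unfolding bg_def using supp_lin_ext[of bg_basis c] by simp
  also have "\<dots> \<subseteq> (\<Union>P\<in>supp c. face_cone P ` Fs P)"
  proof (rule UN_mono[OF subset_refl])
    fix P assume "P \<in> supp c"
    then have "P \<in> GP I" using assms by blast
    then have "supp (bg_basis P :: _ \<Rightarrow> 'k) \<subseteq> {face_cone P F | F. F face_of P \<and> F \<noteq> {} \<and> rel_bounded_face P F}"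
      by (rule supp_bg_basis)
    also have "\<dots> = face_cone P ` Fs P" by (auto simp: Fs_def)
    finally show "supp (bg_basis P :: _ \<Rightarrow> 'k) \<subseteq> face_cone P ` Fs P" .
  qed
  finally show ?thesis .
qed

lemma conj_mult:
  fixes a b :: "('e::finite) poly \<Rightarrow> 'k::comm_ring_1"
  assumes disj: "S \<inter> T = {}" and a: "a \<in> span_of (GP S)" and b: "b \<in> span_of (GP T)"
  shows "bg (mult S a b) = mult S (bg a) (bg b)"
proof
  fix R
  define A where "A = supp a"
  define B where "B = supp b"
  have fA: "finite A" and AG: "A \<subseteq> GP S" using a by (auto simp: span_of_def A_def)
  have fB: "finite B" and BG: "B \<subseteq> GP T" using b by (auto simp: span_of_def B_def)
  define M where "M = (\<lambda>(P, Q). psum P Q) ` (A \<times> B)"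
  have fM: "finite M" using fA fB by (simp add: M_def)
  have mult_eq: "mult S a b X = (\<Sum>P\<in>A. \<Sum>Q\<in>B. if psum P Q = X then a P * b Q else 0)" for X
  proof -
    have "poly_prod S P Q = psum P Q" if "P \<in> A" "Q \<in> B" for P Q
      using poly_prod_eq[OF disj] GP_sub AG BG that by blast
    then show ?thesis unfolding mult_def A_def[symmetric] B_def[symmetric] by (intro sum.cong refl) auto
  qed
  have suppM: "supp (mult S a b) \<subseteq> M"
  proof
    fix X assume X: "X \<in> supp (mult S a b)"
    show "X \<in> M"
    proof (rule ccontr)
      assume "X \<notin> M"
      then have "\<forall>P\<in>A. \<forall>Q\<in>B. psum P Q \<noteq> X" by (auto simp: M_def)
      then have "mult S a b X = 0" unfolding mult_eq by simp
      then show False using X by (simp add: supp_def)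
    qed
  qed
  have LHS: "bg (mult S a b) R = (\<Sum>P\<in>A. \<Sum>Q\<in>B. a P * b Q * bg_basis (psum P Q) R)"
  proof -
    have "bg (mult S a b) R = (\<Sum>X\<in>M. mult S a b X * bg_basis X R)"
      unfolding bg_def by (rule lin_ext_K[OF fM suppM])
    also have "\<dots> = (\<Sum>X\<in>M. (\<Sum>P\<in>A. \<Sum>Q\<in>B. if psum P Q = X then a P * b Q else 0) * bg_basis X R)"
      by (simp only: mult_eq)
    also have "\<dots> = (\<Sum>P\<in>A. \<Sum>Q\<in>B. a P * b Q * bg_basis (psum P Q) R)"
      by (rule sum_collect[OF fM]) (auto simp: M_def)
    finally show ?thesis .
  qed
  define K1 where "K1 = (\<Union>P\<in>A. face_cone P ` Fs P)"
  define K2 where "K2 = (\<Union>Q\<in>B. face_cone Q ` Fs Q)"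
  have fK1: "finite K1" unfolding K1_def using fA AG finite_Fs by blast
  have fK2: "finite K2" unfolding K2_def using fB BG finite_Fs by blast
  have K1G: "K1 \<subseteq> GP S" unfolding K1_def using AG face_cone_GP unfolding Fs_def by blast
  have K2G: "K2 \<subseteq> GP T" unfolding K2_def using BG face_cone_GP unfolding Fs_def by blast
  have s1: "supp (bg a) \<subseteq> K1" unfolding K1_def A_def using supp_bg_K[of a S] AG A_def by blast
  have s2: "supp (bg b) \<subseteq> K2" unfolding K2_def B_def using supp_bg_K[of b T] BG B_def by blast
  have bga: "bg a C = (\<Sum>P\<in>A. a P * bg_basis P C)" for C by (simp add: bg_def lin_ext_def A_def)
  have bgb: "bg b C = (\<Sum>Q\<in>B. b Q * bg_basis Q C)" for C by (simp add: bg_def lin_ext_def B_def)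
  have RHS: "mult S (bg a) (bg b) R = (\<Sum>C1\<in>K1. \<Sum>C2\<in>K2. if psum C1 C2 = R then bg a C1 * bg b C2 else 0)"
  proof -
    have "mult S (bg a) (bg b) R = (\<Sum>C1\<in>K1. \<Sum>C2\<in>supp (bg b). if poly_prod S C1 C2 = R then bg a C1 * bg b C2 else 0)"
      unfolding mult_def by (rule supp_sum_eq[OF fK1 s1]) (auto intro!: sum.neutral)
    also have "\<dots> = (\<Sum>C1\<in>K1. \<Sum>C2\<in>K2. if poly_prod S C1 C2 = R then bg a C1 * bg b C2 else 0)"
      by (intro sum.cong refl supp_sum_eq[OF fK2 s2]) (auto simp: supp_def)
    also have "\<dots> = (\<Sum>C1\<in>K1. \<Sum>C2\<in>K2. if psum C1 C2 = R then bg a C1 * bg b C2 else 0)"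
    proof (intro sum.cong refl)
      fix C1 C2 assume "C1 \<in> K1" "C2 \<in> K2"
      then have "poly_prod S C1 C2 = psum C1 C2" using poly_prod_eq[OF disj] GP_sub K1G K2G by blast
      then show "(if poly_prod S C1 C2 = R then bg a C1 * bg b C2 else 0) = (if psum C1 C2 = R then bg a C1 * bg b C2 else 0)"
        by simp
    qed
    finally show ?thesis .
  qed
  also have "\<dots> = (\<Sum>P\<in>A. \<Sum>Q\<in>B. a P * b Q * (\<Sum>C1\<in>K1. \<Sum>C2\<in>K2. if psum C1 C2 = R then bg_basis P C1 * bg_basis Q C2 else 0))"
    unfolding bga bgb by (rule bilin_swap)
  also have "\<dots> = (\<Sum>P\<in>A. \<Sum>Q\<in>B. a P * b Q * bg_basis (psum P Q) R)"
  proof (intro sum.cong refl)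
    fix P Q assume PQ: "P \<in> A" "Q \<in> B"
    have "bg_basis (psum P Q) R = (\<Sum>C1\<in>K1. \<Sum>C2\<in>K2. if psum C1 C2 = R then bg_basis P C1 * bg_basis Q C2 else (0::'k))"
      by (rule mult_key[OF disj]) (use PQ AG BG fK1 fK2 in \<open>auto simp: K1_def K2_def\<close>)
    then show "a P * b Q * (\<Sum>C1\<in>K1. \<Sum>C2\<in>K2. if psum C1 C2 = R then bg_basis P C1 * bg_basis Q C2 else 0) =
          a P * b Q * bg_basis (psum P Q) R" by simp
  qed
  finally show "bg (mult S a b) R = mult S (bg a) (bg b) R" using LHS by simp
qed




context
  fixes h h' :: "('e::finite) pt \<Rightarrow> 'e pt"
  assumes lh: "linear h" and lh': "linear h'" and hh': "\<And>x. h' (h x) = x" and h'h: "\<And>x. h (h' x) = x"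
begin

lemma inj_h: "inj h" by (metis hh' injI)
lemma inj_h': "inj h'" by (metis h'h injI)

lemma h_add: "h (x + y) = h x + h y" using lh by (simp add: linear_add)
lemma h_scale: "h (c *\<^sub>R x) = c *\<^sub>R h x" using lh by (simp add: linear_scale)
lemma h'_add: "h' (x + y) = h' x + h' y" using lh' by (simp add: linear_add)
lemma h'_scale: "h' (c *\<^sub>R x) = c *\<^sub>R h' x" using lh' by (simp add: linear_scale)

lemma h_img_mem: "h x \<in> h ` A \<longleftrightarrow> x \<in> A"
  using inj_h by (simp add: inj_image_mem_iff)

lemma h_img_eq: "h ` A = B \<longleftrightarrow> A = h' ` B"
proof -
  have 1: "h' ` (h ` A) = A" by (simp add: image_comp hh')
  have 2: "h ` (h' ` B) = B" by (simp add: image_comp h'h)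
  show ?thesis using 1 2 by blast
qed

lemma tangent_h: "tangent_cone (h ` P) (h f) = h ` tangent_cone P f"
proof
  show "tangent_cone (h ` P) (h f) \<subseteq> h ` tangent_cone P f"
  proof
    fix y assume "y \<in> tangent_cone (h ` P) (h f)"
    then obtain x e where y: "y = h f + x" and e: "e > 0" and ex: "\<forall>\<epsilon>. 0 < \<epsilon> \<and> \<epsilon> < e \<longrightarrow> h f + \<epsilon> *\<^sub>R x \<in> h ` P"
      unfolding tangent_cone_def by blast
    have "\<forall>\<epsilon>. 0 < \<epsilon> \<and> \<epsilon> < e \<longrightarrow> f + \<epsilon> *\<^sub>R h' x \<in> P"
    proof (intro allI impI)
      fix \<epsilon> assume "0 < \<epsilon> \<and> \<epsilon> < e"
      then have "h f + \<epsilon> *\<^sub>R x \<in> h ` P" using ex by blast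
      moreover have "h f + \<epsilon> *\<^sub>R x = h (f + \<epsilon> *\<^sub>R h' x)" by (simp add: h_add h_scale h'h)
      ultimately show "f + \<epsilon> *\<^sub>R h' x \<in> P" using h_img_mem by metis
    qed
    then have "f + h' x \<in> tangent_cone P f" unfolding tangent_cone_def using e by blast
    moreover have "y = h (f + h' x)" using y by (simp add: h_add h'h)
    ultimately show "y \<in> h ` tangent_cone P f" by blast
  qed
  show "h ` tangent_cone P f \<subseteq> tangent_cone (h ` P) (h f)"
  proof
    fix y assume "y \<in> h ` tangent_cone P f"
    then obtain x e where y: "y = h (f + x)" and e: "e > 0" and ex: "\<forall>\<epsilon>. 0 < \<epsilon> \<and> \<epsilon> < e \<longrightarrow> f + \<epsilon> *\<^sub>R x \<in> P"
      unfolding tangent_cone_def by blast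
    have "\<forall>\<epsilon>. 0 < \<epsilon> \<and> \<epsilon> < e \<longrightarrow> h f + \<epsilon> *\<^sub>R h x \<in> h ` P"
    proof (intro allI impI)
      fix \<epsilon> assume "0 < \<epsilon> \<and> \<epsilon> < e"
      then have "f + \<epsilon> *\<^sub>R x \<in> P" using ex by blast
      moreover have "h f + \<epsilon> *\<^sub>R h x = h (f + \<epsilon> *\<^sub>R x)" by (simp add: h_add h_scale)
      ultimately show "h f + \<epsilon> *\<^sub>R h x \<in> h ` P" by simp
    qed
    moreover have "y = h f + h x" using y by (simp add: h_add)
    ultimately show "y \<in> tangent_cone (h ` P) (h f)" unfolding tangent_cone_def using e by blast
  qed
qed

lemma lineality_h: "lineality (h ` P) = h ` lineality P"
proof -
  have "d \<in> lineality (h ` P) \<longleftrightarrow> h' d \<in> lineality P" for d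
  proof -
    have "(\<forall>x\<in>h ` P. \<forall>t. x + t *\<^sub>R d \<in> h ` P) \<longleftrightarrow> (\<forall>x\<in>P. \<forall>t. x + t *\<^sub>R h' d \<in> P)"
    proof -
      have "h x + t *\<^sub>R d = h (x + t *\<^sub>R h' d)" for x t by (simp add: h_add h_scale h'h)
      then show ?thesis by (auto simp: h_img_mem)
    qed
    then show ?thesis by (simp add: lineality_def)
  qed
  moreover have "d \<in> h ` X \<longleftrightarrow> h' d \<in> X" for d X
    by (metis h'h h_img_mem)
  ultimately show ?thesis by blast
qed

lemma bl_h: "bounded_linear h" "bounded_linear h'"
  using lh lh' linear_conv_bounded_linear by auto

lemma rb_h: "rel_bounded_face (h ` P) (h ` F) \<longleftrightarrow> rel_bounded_face P F"
proof -
  have face: "h ` F face_of h ` P \<longleftrightarrow> F face_of P" by (rule face_of_linear_image[OF lh inj_h])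
  have "(\<exists>B. bounded B \<and> h ` F \<subseteq> {b + l | b l. b \<in> B \<and> l \<in> lineality (h ` P)}) \<longleftrightarrow>
        (\<exists>B. bounded B \<and> F \<subseteq> {b + l | b l. b \<in> B \<and> l \<in> lineality P})"
  proof
    assume "\<exists>B. bounded B \<and> h ` F \<subseteq> {b + l | b l. b \<in> B \<and> l \<in> lineality (h ` P)}"
    then obtain B where B: "bounded B" "h ` F \<subseteq> {b + l | b l. b \<in> B \<and> l \<in> lineality (h ` P)}" by blast
    have "F \<subseteq> {b + l | b l. b \<in> h' ` B \<and> l \<in> lineality P}"
    proof
      fix f assume "f \<in> F"
      then obtain b l where "b \<in> B" "l \<in> lineality (h ` P)" "h f = b + l" using B by blast
      moreover then have "h' l \<in> lineality P" unfolding lineality_h by (auto simp: hh')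
      moreover have "f = h' b + h' l" using \<open>h f = b + l\<close> by (metis h'_add hh')
      ultimately show "f \<in> {b + l | b l. b \<in> h' ` B \<and> l \<in> lineality P}" by blast
    qed
    moreover have "bounded (h' ` B)" using B bounded_linear_image bl_h by blast
    ultimately show "\<exists>B. bounded B \<and> F \<subseteq> {b + l | b l. b \<in> B \<and> l \<in> lineality P}" by blast
  next
    assume "\<exists>B. bounded B \<and> F \<subseteq> {b + l | b l. b \<in> B \<and> l \<in> lineality P}"
    then obtain B where B: "bounded B" "F \<subseteq> {b + l | b l. b \<in> B \<and> l \<in> lineality P}" by blast
    have "h ` F \<subseteq> {b + l | b l. b \<in> h ` B \<and> l \<in> lineality (h ` P)}"
    proof
      fix y assume "y \<in> h ` F"
      then obtain f where "f \<in> F" "y = h f" by blast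
      then obtain b l where "b \<in> B" "l \<in> lineality P" "f = b + l" using B by blast
      moreover have "h l \<in> lineality (h ` P)" unfolding lineality_h using calculation by blast
      moreover have "y = h b + h l" using \<open>y = h f\<close> \<open>f = b + l\<close> by (simp add: h_add)
      ultimately show "y \<in> {b + l | b l. b \<in> h ` B \<and> l \<in> lineality (h ` P)}" by blast
    qed
    moreover have "bounded (h ` B)" using B bounded_linear_image bl_h by blast
    ultimately show "\<exists>B. bounded B \<and> h ` F \<subseteq> {b + l | b l. b \<in> B \<and> l \<in> lineality (h ` P)}" by blast
  qed
  then show ?thesis using face unfolding rel_bounded_face_def by blast
qed

lemma dim_h: "dimension (h ` F) = dimension F"
  by (simp add: dimension_def aff_dim_injective_linear_image[OF lh inj_h])

lemma face_cone_h:
  assumes P: "P \<in> GP I" and F: "F face_of P" "F \<noteq> {}"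
  shows "face_cone (h ` P) (h ` F) = h ` face_cone P F"
proof -
  obtain z where z: "ext_submodular I z" "P = gp_of I z" using P GP_E by blast
  have FP: "F \<subseteq> P" using F face_of_imp_subset by blast
  have "h ` F face_of h ` P" using F face_of_linear_image[OF lh inj_h] by blast
  moreover have "h ` F \<noteq> {}" using F by simp
  ultimately have "(SOME g. g \<in> rel_interior (h ` F)) \<in> rel_interior (h ` F)" by (rule some_ri)
  moreover have "rel_interior (h ` F) = h ` rel_interior F"
    by (rule rel_interior_injective_linear_image[OF bl_h(1) inj_h])
  ultimately obtain f where f: "f \<in> rel_interior F" "(SOME g. g \<in> rel_interior (h ` F)) = h f" by auto
  have "face_cone (h ` P) (h ` F) = tangent_cone (h ` P) (h f)" unfolding face_cone_def f(2) ..
  also have "\<dots> = h ` tangent_cone P f" by (rule tangent_h)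
  also have "tangent_cone P f = face_cone P F"
    using tangent_ri_eq[OF z(1)] face_cone_gp[OF z(1)] FP f F z(2) by metis
  finally show ?thesis .
qed

lemma bg_basis_h:
  assumes P: "P \<in> GP I"
  shows "bg_basis (h ` P) Q = bg_basis P (h' ` Q)"
proof -
  have eq: "{F'. F' face_of h ` P \<and> F' \<noteq> {} \<and> rel_bounded_face (h ` P) F' \<and> face_cone (h ` P) F' = Q}
      = (image h) ` {F. F face_of P \<and> F \<noteq> {} \<and> rel_bounded_face P F \<and> face_cone P F = h' ` Q}"
  proof
    show "{F'. F' face_of h ` P \<and> F' \<noteq> {} \<and> rel_bounded_face (h ` P) F' \<and> face_cone (h ` P) F' = Q}
      \<subseteq> (image h) ` {F. F face_of P \<and> F \<noteq> {} \<and> rel_bounded_face P F \<and> face_cone P F = h' ` Q}"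
    proof
      fix F' assume F': "F' \<in> {F'. F' face_of h ` P \<and> F' \<noteq> {} \<and> rel_bounded_face (h ` P) F' \<and> face_cone (h ` P) F' = Q}"
      then have "F' \<in> {T. T face_of h ` P}" by simp
      then obtain F where F: "F face_of P" "F' = h ` F" using faces_of_linear_image[OF lh inj_h, of P] by auto
      have "F \<noteq> {}" using F F' by auto
      moreover have "rel_bounded_face P F" using F F' rb_h by auto
      moreover have "face_cone P F = h' ` Q"
        using F' F face_cone_h[OF P F(1) \<open>F \<noteq> {}\<close>] h_img_eq by auto
      ultimately show "F' \<in> (image h) ` {F. F face_of P \<and> F \<noteq> {} \<and> rel_bounded_face P F \<and> face_cone P F = h' ` Q}"
        using F by blast
    qed
    show "(image h) ` {F. F face_of P \<and> F \<noteq> {} \<and> rel_bounded_face P F \<and> face_cone P F = h' ` Q}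
      \<subseteq> {F'. F' face_of h ` P \<and> F' \<noteq> {} \<and> rel_bounded_face (h ` P) F' \<and> face_cone (h ` P) F' = Q}"
    proof
      fix F' assume "F' \<in> (image h) ` {F. F face_of P \<and> F \<noteq> {} \<and> rel_bounded_face P F \<and> face_cone P F = h' ` Q}"
      then obtain F where F: "F face_of P" "F \<noteq> {}" "rel_bounded_face P F" "face_cone P F = h' ` Q" "F' = h ` F"
        by blast
      have "face_cone (h ` P) F' = Q" using face_cone_h[OF P F(1,2)] F(4,5) h_img_eq by auto
      then show "F' \<in> {F'. F' face_of h ` P \<and> F' \<noteq> {} \<and> rel_bounded_face (h ` P) F' \<and> face_cone (h ` P) F' = Q}"
        using F face_of_linear_image[OF lh inj_h] rb_h by auto
    qed
  qed
  have inj: "inj_on (image h) X" for X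
    using inj_h by (meson inj_image_eq_iff inj_onI)
  show ?thesis unfolding bg_basis_def eq by (subst sum.reindex[OF inj]) (simp add: dim_h)
qed

lemma relabel_like:
  fixes c :: "('e::finite) poly \<Rightarrow> 'k::comm_ring_1"
  assumes fin: "finite (supp c)"
  shows "(\<lambda>Q. \<Sum>P\<in>supp c. if h ` P = Q then c P else 0) = (\<lambda>Q. c (h' ` Q))"
proof
  fix Q
  have "(\<Sum>P\<in>supp c. if h ` P = Q then c P else 0) = (\<Sum>P\<in>supp c. if P = h' ` Q then c P else 0)"
    by (intro sum.cong refl) (simp add: h_img_eq)
  also have "\<dots> = c (h' ` Q)" using fin by (simp add: sum.delta' supp_def)
  finally show "(\<Sum>P\<in>supp c. if h ` P = Q then c P else 0) = c (h' ` Q)" .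
qed

lemma bg_h:
  fixes c :: "('e::finite) poly \<Rightarrow> 'k::comm_ring_1"
  assumes c: "c \<in> span_of (GP I)"
  shows "bg (\<lambda>Q. c (h' ` Q)) = (\<lambda>Q. bg c (h' ` Q))"
proof
  fix Q
  have fin: "finite (supp c)" and sub: "supp c \<subseteq> GP I" using c by (auto simp: span_of_def)
  have sup: "supp (\<lambda>Q. c (h' ` Q)) = (image h) ` supp c"
  proof -
    have "c (h' ` Q) \<noteq> 0 \<longleftrightarrow> (\<exists>P. c P \<noteq> 0 \<and> Q = h ` P)" for Q
      by (metis h_img_eq)
    then show ?thesis by (auto simp: supp_def)
  qed
  have inj: "inj_on (image h) X" for X
    using inj_h by (meson inj_image_eq_iff inj_onI)
  have "bg (\<lambda>Q. c (h' ` Q)) Q = (\<Sum>R\<in>(image h) ` supp c. c (h' ` R) * bg_basis R Q)"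
    unfolding bg_def lin_ext_def sup ..
  also have "\<dots> = (\<Sum>P\<in>supp c. c (h' ` (h ` P)) * bg_basis (h ` P) Q)"
    by (subst sum.reindex[OF inj]) simp
  also have "\<dots> = (\<Sum>P\<in>supp c. c P * bg_basis P (h' ` Q))"
  proof (intro sum.cong refl)
    fix P assume "P \<in> supp c"
    then have "P \<in> GP I" using sub by blast
    moreover have "h' ` (h ` P) = P" by (simp add: image_comp hh')
    moreover have "bg_basis (h ` P) Q = (bg_basis P (h' ` Q) :: 'k)" using bg_basis_h calculation(1) by blast
    ultimately show "c (h' ` (h ` P)) * bg_basis (h ` P) Q = c P * bg_basis P (h' ` Q)"
      by simp
  qed
  also have "\<dots> = bg c (h' ` Q)" by (simp add: bg_def lin_ext_def)
  finally show "bg (\<lambda>Q. c (h' ` Q)) Q = bg c (h' ` Q)" .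
qed

end

lemma relabel_lin:
  assumes "bij (\<sigma> :: 'e \<Rightarrow> 'e)"
  shows "linear (relabel_pt \<sigma> :: ('e::finite) pt \<Rightarrow> _)"
  by (rule linearI) (auto simp: relabel_pt_def vec_eq_iff)

lemma relabel_inv:
  assumes "bij (\<sigma> :: ('e::finite) \<Rightarrow> 'e)"
  shows "relabel_pt (inv \<sigma>) (relabel_pt \<sigma> x) = x" "relabel_pt \<sigma> (relabel_pt (inv \<sigma>) x) = x"
  using assms by (auto simp: relabel_pt_def vec_eq_iff bij_def inv_inv_eq surj_f_inv_f)

lemma conj_nat:
  fixes c :: "('e::finite) poly \<Rightarrow> 'k::comm_ring_1"
  assumes \<sigma>: "bij \<sigma>" and c: "c \<in> span_of (GP I)"
  shows "bg (relabel \<sigma> c) = relabel \<sigma> (bg c)"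
proof -
  let ?h = "relabel_pt \<sigma> :: 'e pt \<Rightarrow> 'e pt"
  let ?h' = "relabel_pt (inv \<sigma>) :: 'e pt \<Rightarrow> 'e pt"
  have bi: "bij (inv \<sigma>)" using \<sigma> by (simp add: bij_imp_bij_inv)
  note L = relabel_lin[OF \<sigma>] relabel_lin[OF bi] relabel_inv[OF \<sigma>]
  have fc: "finite (supp c)" using c by (simp add: span_of_def)
  have fbc: "finite (supp (bg c))" using conj2[OF c] by (simp add: span_of_def)
  have "relabel \<sigma> c = (\<lambda>Q. c (?h' ` Q))"
    unfolding relabel_def using relabel_like[OF L fc] .
  moreover have "relabel \<sigma> (bg c) = (\<lambda>Q. bg c (?h' ` Q))"
    unfolding relabel_def using relabel_like[OF L fbc] .
  ultimately show ?thesis using bg_h[OF L c] by simp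
qed




lemma ssum_axis: "ssum A (axis i (1::real)) = (if i \<in> A then 1 else 0)"
  by (simp add: ssum_def axis_def)

lemma tight_family:
  assumes sm: "ext_submodular I z" and x: "x \<in> gp_of I z"
    and fin: "finite \<F>" "\<F> \<noteq> {}" and t: "\<And>A. A \<in> \<F> \<Longrightarrow> tight I z x A"
  shows "tight I z x (\<Inter>\<F>) \<and> tight I z x (\<Union>\<F>)"
  using fin t
proof (induction \<F> rule: finite_ne_induct)
  case (singleton A) then show ?case by simp
next
  case (insert A \<F>)
  then have "tight I z x A" "tight I z x (\<Inter>\<F>)" "tight I z x (\<Union>\<F>)" by auto
  then show ?case using tight_lattice[OF sm x] by (metis Inter_insert Union_insert)
qed

lemma exchange:
  assumes sm: "ext_submodular I z" and x: "x \<in> gp_of I z" and ij: "i \<in> I" "j \<in> I" "i \<noteq> j"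
    and nt: "\<not> (\<exists>A. tight I z x A \<and> i \<in> A \<and> j \<notin> A)"
  shows "\<exists>d>0. x + d *\<^sub>R (axis i 1 - axis j 1) \<in> gp_of I z"
proof -
  obtain d where d: "d > 0" and gap: "\<And>A. A \<subseteq> I \<Longrightarrow> \<not> tight I z x A \<Longrightarrow> z A \<noteq> \<infinity> \<Longrightarrow> ssum A x + d \<le> real_of_ereal (z A)"
    using gap_exists[OF x sm] by blast
  define v :: "'a pt" where "v = axis i 1 - axis j 1"
  have sv: "ssum A v = (if i \<in> A then 1 else 0) - (if j \<in> A then 1 else 0)" for A
    by (simp add: v_def ssum_diff ssum_axis)
  have "x + d *\<^sub>R v \<in> gp_of I z"
  proof -
    have "v \<in> RI I" using ij by (auto simp: v_def RI_def axis_def)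
    then have "x + d *\<^sub>R v \<in> RI I" using gp_ofD(1)[OF x] by (simp add: RI_add RI_scale)
    moreover have "ssum I (x + d *\<^sub>R v) = ssum I x" using ij by (simp add: ssum_add ssum_scale sv)
    then have "ereal (ssum I (x + d *\<^sub>R v)) = z I" using gp_ofD(2)[OF x] by simp
    moreover have "ereal (ssum A (x + d *\<^sub>R v)) \<le> z A" if A: "A \<subseteq> I" for A
    proof (cases "i \<in> A \<and> j \<notin> A")
      case True
      then have nA: "\<not> tight I z x A" using nt by blast
      show ?thesis
      proof (cases "z A = \<infinity>")
        case False
        have "ssum A x + d \<le> real_of_ereal (z A)" using gap[OF A nA False] .
        moreover have "z A \<noteq> -\<infinity>" using sm A by (auto simp: ext_submodular_def)
        moreover have "ssum A (x + d *\<^sub>R v) = ssum A x + d" using True by (simp add: ssum_add ssum_scale sv)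
        ultimately show ?thesis using False by (cases "z A") auto
      qed simp
    next
      case False
      then have "ssum A v \<le> 0" by (auto simp: sv)
      then have "ssum A (x + d *\<^sub>R v) \<le> ssum A x" using d by (simp add: ssum_add ssum_scale mult_nonneg_nonpos)
      moreover have "ereal (ssum A x) \<le> z A" using gp_ofD(3)[OF x A] .
      ultimately show ?thesis by (meson ereal_less_eq(3) order_trans)
    qed
    ultimately show ?thesis by (simp add: gp_of_alt)
  qed
  then show ?thesis using d by (auto simp: v_def)
qed

context
  fixes S T :: "('e::finite) set"
  assumes disj: "S \<inter> T = {}"
begin

lemma claim1:
  assumes sm: "ext_submodular (S \<union> T) z" and x: "x \<in> max_face S (gp_of (S \<union> T) z)"
  shows "tight (S \<union> T) z x S"
proof -
  let ?I = "S \<union> T"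
  let ?P = "gp_of ?I z"
  have xP: "x \<in> ?P" and xmax: "\<And>y. y \<in> ?P \<Longrightarrow> ssum S y \<le> ssum S x"
    using x by (auto simp: max_face_def ssum_def)
  show ?thesis
  proof (cases "S = {} \<or> T = {}")
    case True
    then show ?thesis
    proof
      assume "S = {}" then show ?thesis using sm by (simp add: tight_def ssum_def ext_submodular_def)
    next
      assume "T = {}" then show ?thesis using tight_I[OF xP] by simp
    qed
  next
    case False
    then have Sne: "S \<noteq> {}" and Tne: "T \<noteq> {}" by auto
    have ex: "\<exists>A. tight ?I z x A \<and> i \<in> A \<and> j \<notin> A" if ij: "i \<in> S" "j \<in> T" for i j
    proof (rule ccontr)
      assume nt: "\<not> (\<exists>A. tight ?I z x A \<and> i \<in> A \<and> j \<notin> A)"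
      have "i \<noteq> j" using ij disj by blast
      then obtain d where d: "d > 0" "x + d *\<^sub>R (axis i 1 - axis j 1) \<in> ?P"
        using exchange[OF sm xP _ _ _ nt] ij by blast
      have "ssum S (x + d *\<^sub>R (axis i 1 - axis j 1)) = ssum S x + d"
        using ij disj by (auto simp: ssum_add ssum_scale ssum_diff ssum_axis)
      then show False using xmax[OF d(2)] d(1) by simp
    qed
    define A where "A = (\<lambda>i j. SOME A. tight ?I z x A \<and> i \<in> A \<and> j \<notin> A)"
    have A: "tight ?I z x (A i j) \<and> i \<in> A i j \<and> j \<notin> A i j" if "i \<in> S" "j \<in> T" for i j
      unfolding A_def using someI_ex[OF ex[OF that]] .
    define C where "C = (\<lambda>i. \<Inter>((A i) ` T))"
    have C: "tight ?I z x (C i) \<and> i \<in> C i \<and> C i \<inter> T = {}" if i: "i \<in> S" for i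
    proof -
      have "tight ?I z x (\<Inter>((A i) ` T))"
        using tight_family[OF sm xP, of "(A i) ` T"] Tne A[OF i] by auto
      moreover have "i \<in> \<Inter>((A i) ` T)" using A[OF i] by auto
      moreover have "\<Inter>((A i) ` T) \<inter> T = {}" using A[OF i] by auto
      ultimately show ?thesis by (simp add: C_def)
    qed
    define B where "B = \<Union>(C ` S)"
    have "tight ?I z x B"
      unfolding B_def using tight_family[OF sm xP, of "C ` S"] Sne C by auto
    moreover have "B = S"
    proof
      have "B \<subseteq> ?I" using \<open>tight ?I z x B\<close> by (simp add: tight_def)
      moreover have "B \<inter> T = {}" using C by (auto simp: B_def)
      ultimately show "B \<subseteq> S" by blast
      show "S \<subseteq> B" using C by (auto simp: B_def)
    qed
    ultimately show ?thesis by simp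
  qed
qed

definition z2 :: "('e set \<Rightarrow> ereal) \<Rightarrow> 'e set \<Rightarrow> ereal" where
  "z2 z B = z (B \<union> S) - z S"

lemma sub_S:
  assumes sm: "ext_submodular (S \<union> T) z" and zS: "z S \<noteq> \<infinity>"
  shows "ext_submodular S z"
proof -
  have sub: "\<And>A. A \<subseteq> S \<Longrightarrow> A \<subseteq> S \<union> T" by blast
  have a1: "\<forall>A\<subseteq>S. z A \<noteq> -\<infinity>"
  proof (intro allI impI)
    fix A assume "A \<subseteq> S"
    then have "A \<subseteq> S \<union> T" by blast
    then show "z A \<noteq> -\<infinity>" using sm unfolding ext_submodular_def by blast
  qed
  have a2: "z {} = 0" using sm unfolding ext_submodular_def by blast
  have a3: "\<forall>A\<subseteq>S. \<forall>B\<subseteq>S. z A \<noteq> \<infinity> \<longrightarrow> z B \<noteq> \<infinity> \<longrightarrow> z (A \<union> B) + z (A \<inter> B) \<le> z A + z B"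
  proof (intro allI impI)
    fix A B assume "A \<subseteq> S" "B \<subseteq> S" "z A \<noteq> \<infinity>" "z B \<noteq> \<infinity>"
    moreover have "A \<subseteq> S \<union> T" "B \<subseteq> S \<union> T" using calculation by auto
    moreover have "\<forall>A\<subseteq>S \<union> T. \<forall>B\<subseteq>S \<union> T. z A \<noteq> \<infinity> \<longrightarrow> z B \<noteq> \<infinity> \<longrightarrow> z (A \<union> B) + z (A \<inter> B) \<le> z A + z B"
      using sm unfolding ext_submodular_def by blast
    ultimately show "z (A \<union> B) + z (A \<inter> B) \<le> z A + z B" by blast
  qed
  show ?thesis unfolding ext_submodular_def using a1 a2 a3 zS by blast
qed

lemma sub_T:
  assumes sm: "ext_submodular (S \<union> T) z" and zS: "z S \<noteq> \<infinity>"
  shows "ext_submodular T (z2 z)"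
proof -
  have nm: "\<And>A. A \<subseteq> S \<union> T \<Longrightarrow> z A \<noteq> -\<infinity>" using sm unfolding ext_submodular_def by blast
  have zI: "z (S \<union> T) \<noteq> \<infinity>" using sm unfolding ext_submodular_def by blast
  have smod: "\<And>A B. A \<subseteq> S \<union> T \<Longrightarrow> B \<subseteq> S \<union> T \<Longrightarrow> z A \<noteq> \<infinity> \<Longrightarrow> z B \<noteq> \<infinity> \<Longrightarrow> z (A \<union> B) + z (A \<inter> B) \<le> z A + z B"
    using sm unfolding ext_submodular_def by blast
  have zSr: "z S \<noteq> -\<infinity>" using nm[of S] by blast
  obtain s where s: "z S = ereal s" using zS zSr by (cases "z S") auto
  have a1: "\<forall>B\<subseteq>T. z2 z B \<noteq> -\<infinity>"
  proof (intro allI impI)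
    fix B assume "B \<subseteq> T"
    then have "B \<union> S \<subseteq> S \<union> T" by blast
    then have "z (B \<union> S) \<noteq> -\<infinity>" by (rule nm)
    then show "z2 z B \<noteq> -\<infinity>" by (cases "z (B \<union> S)") (auto simp: z2_def s)
  qed
  have a2: "z2 z T \<noteq> \<infinity>"
  proof -
    have "T \<union> S = S \<union> T" by blast
    then have "z (T \<union> S) \<noteq> \<infinity>" using zI by simp
    then show ?thesis by (cases "z (T \<union> S)") (auto simp: z2_def s)
  qed
  have a3: "z2 z {} = 0" by (simp add: z2_def s)
  have a4: "\<forall>B\<subseteq>T. \<forall>C\<subseteq>T. z2 z B \<noteq> \<infinity> \<longrightarrow> z2 z C \<noteq> \<infinity> \<longrightarrow> z2 z (B \<union> C) + z2 z (B \<inter> C) \<le> z2 z B + z2 z C"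
  proof (intro allI impI)
    fix B C assume BC: "B \<subseteq> T" "C \<subseteq> T" "z2 z B \<noteq> \<infinity>" "z2 z C \<noteq> \<infinity>"
    have fB: "z (B \<union> S) \<noteq> \<infinity>" using BC(3) by (cases "z (B \<union> S)") (auto simp: z2_def s)
    have fC: "z (C \<union> S) \<noteq> \<infinity>" using BC(4) by (cases "z (C \<union> S)") (auto simp: z2_def s)
    have sB: "B \<union> S \<subseteq> S \<union> T" and sC: "C \<union> S \<subseteq> S \<union> T" using BC by blast+
    have e1: "(B \<union> S) \<union> (C \<union> S) = (B \<union> C) \<union> S" and e2: "(B \<union> S) \<inter> (C \<union> S) = (B \<inter> C) \<union> S" by blast+
    have le: "z ((B \<union> C) \<union> S) + z ((B \<inter> C) \<union> S) \<le> z (B \<union> S) + z (C \<union> S)"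
      using smod[OF sB sC fB fC] unfolding e1 e2 .
    have n1: "z ((B \<union> C) \<union> S) \<noteq> -\<infinity>" by (rule nm) (use BC in blast)
    have n2: "z ((B \<inter> C) \<union> S) \<noteq> -\<infinity>" by (rule nm) (use BC in blast)
    obtain b where b: "z (B \<union> S) = ereal b" using fB nm[OF sB] by (cases "z (B \<union> S)") auto
    obtain c where c: "z (C \<union> S) = ereal c" using fC nm[OF sC] by (cases "z (C \<union> S)") auto
    obtain u where u: "z ((B \<union> C) \<union> S) = ereal u" using le n1 n2 b c
      by (cases "z ((B \<union> C) \<union> S)"; cases "z ((B \<inter> C) \<union> S)") auto
    obtain v where v: "z ((B \<inter> C) \<union> S) = ereal v" using le n1 n2 b c
      by (cases "z ((B \<union> C) \<union> S)"; cases "z ((B \<inter> C) \<union> S)") auto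
    have "u + v \<le> b + c" using le u v b c by simp
    then show "z2 z (B \<union> C) + z2 z (B \<inter> C) \<le> z2 z B + z2 z C" unfolding z2_def s using u v b c by simp
  qed
  show ?thesis unfolding ext_submodular_def using a1 a2 a3 a4 by blast
qed

end




lemma ssum_RI: "u \<in> RI S \<Longrightarrow> ssum A u = ssum (A \<inter> S) u"
  unfolding ssum_def RI_def by (rule sum.mono_neutral_right) auto

lemma ssum_pr: "ssum A (pr S x) = ssum (A \<inter> S) x"
proof -
  have "ssum A (pr S x) = ssum (A \<inter> S) (pr S x)" using pr_RI by (rule ssum_RI)
  also have "\<dots> = ssum (A \<inter> S) x" unfolding ssum_def pr_def by (intro sum.cong) auto
  finally show ?thesis .
qed

lemma ssum_disj: "A \<inter> B = {} \<Longrightarrow> ssum (A \<union> B) x = ssum A x + ssum B x"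
  using ssum_Un_Int[of A B x] by (simp add: ssum_def)

lemma max_face_alt: "max_face S P = {x \<in> P. \<forall>y\<in>P. ssum S y \<le> ssum S x}"
  by (simp add: max_face_def ssum_def)

context
  fixes S T :: "('e::finite) set"
  assumes disj: "S \<inter> T = {}"
begin

lemma struct_G:
  assumes sm: "ext_submodular (S \<union> T) z" and Gne: "max_face S (gp_of (S \<union> T) z) \<noteq> {}"
  shows "z S \<noteq> \<infinity>" "max_face S (gp_of (S \<union> T) z) = psum (gp_of S z) (gp_of T (z2 S z))"
proof -
  let ?I = "S \<union> T"
  let ?P = "gp_of ?I z"
  let ?G = "max_face S ?P"
  obtain x0 where x0: "x0 \<in> ?G" using Gne by blast
  have tS: "tight ?I z x S" if "x \<in> ?G" for x using claim1[OF disj sm that] .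
  have nm: "\<And>A. A \<subseteq> ?I \<Longrightarrow> z A \<noteq> -\<infinity>" using sm unfolding ext_submodular_def by blast
  have smod: "\<And>A B. A \<subseteq> ?I \<Longrightarrow> B \<subseteq> ?I \<Longrightarrow> z A \<noteq> \<infinity> \<Longrightarrow> z B \<noteq> \<infinity> \<Longrightarrow> z (A \<union> B) + z (A \<inter> B) \<le> z A + z B"
    using sm unfolding ext_submodular_def by blast
  have zIf: "z ?I \<noteq> \<infinity>" using sm unfolding ext_submodular_def by blast
  have "ereal (ssum S x0) = z S" using tS[OF x0] by (simp add: tight_def)
  then obtain s where s: "z S = ereal s" by (metis)
  then show "z S \<noteq> \<infinity>" by simp
  have x0P: "x0 \<in> ?P" using x0 by (simp add: max_face_alt)
  have G_char: "x \<in> ?G \<longleftrightarrow> x \<in> ?P \<and> ssum S x = s" for x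
  proof
    assume "x \<in> ?G" then show "x \<in> ?P \<and> ssum S x = s" using tS[of x] s by (auto simp: max_face_alt tight_def)
  next
    assume a: "x \<in> ?P \<and> ssum S x = s"
    have "ssum S y \<le> s" if "y \<in> ?P" for y
      using gp_ofD(3)[OF that, of S] s by auto
    then show "x \<in> ?G" using a by (auto simp: max_face_alt)
  qed
  show "?G = psum (gp_of S z) (gp_of T (z2 S z))"
  proof
    show "?G \<subseteq> psum (gp_of S z) (gp_of T (z2 S z))"
    proof
      fix x assume xG: "x \<in> ?G"
      then have xP: "x \<in> ?P" and xS: "ssum S x = s" using G_char by auto
      have xR: "x \<in> RI ?I" using gp_ofD(1)[OF xP] .
      have xI: "ereal (ssum ?I x) = z ?I" using gp_ofD(2)[OF xP] .
      have "pr S x \<in> gp_of S z"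
      proof -
        have "ereal (ssum S (pr S x)) = z S" using xS s by (simp add: ssum_pr)
        moreover have "ereal (ssum A (pr S x)) \<le> z A" if "A \<subseteq> S" for A
        proof -
          have "A \<subseteq> ?I" "A \<inter> S = A" using that by auto
          then show ?thesis using gp_ofD(3)[OF xP, of A] by (simp add: ssum_pr)
        qed
        ultimately show ?thesis using pr_RI by (simp add: gp_of_alt)
      qed
      moreover have "pr T x \<in> gp_of T (z2 S z)"
      proof -
        have "ssum ?I x = ssum S x + ssum T x" using disj by (rule ssum_disj)
        then have "z ?I = ereal (s + ssum T x)" using xI xS by simp
        then have "ereal (ssum T (pr T x)) = z ?I - ereal s" by (simp add: ssum_pr)
        moreover have "T \<union> S = ?I" by blast
        moreover have "z2 S z T = z (T \<union> S) - z S" unfolding z2_def[OF disj] ..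
        ultimately have "ereal (ssum T (pr T x)) = z2 S z T" using s by simp
        moreover have "ereal (ssum B (pr T x)) \<le> z2 S z B" if B: "B \<subseteq> T" for B
        proof -
          have BS: "B \<union> S \<subseteq> ?I" "B \<inter> S = {}" using B disj by auto
          have "ssum (B \<union> S) x = ssum B x + ssum S x" using BS(2) by (rule ssum_disj)
          moreover have "ereal (ssum (B \<union> S) x) \<le> z (B \<union> S)" using gp_ofD(3)[OF xP BS(1)] .
          moreover have "ssum B (pr T x) = ssum B x" using B by (simp add: ssum_pr Int_absorb2)
          ultimately show ?thesis unfolding z2_def[OF disj] s using xS
            by (cases "z (B \<union> S)") auto
        qed
        ultimately show ?thesis using pr_RI by (simp add: gp_of_alt)
      qed
      moreover have "x = pr S x + pr T x" using pr_split[OF disj xR] .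
      ultimately show "x \<in> psum (gp_of S z) (gp_of T (z2 S z))" unfolding psum_def by blast
    qed
    show "psum (gp_of S z) (gp_of T (z2 S z)) \<subseteq> ?G"
    proof
      fix w assume "w \<in> psum (gp_of S z) (gp_of T (z2 S z))"
      then obtain u v where u: "u \<in> gp_of S z" and v: "v \<in> gp_of T (z2 S z)" and w: "w = u + v"
        unfolding psum_def by blast
      have uR: "u \<in> RI S" and vR: "v \<in> RI T" using gp_ofD(1) u v by auto
      have uS: "ssum S u = s" using gp_ofD(2)[OF u] s by simp
      have svS: "ssum S v = 0" using ssum_RI[OF vR, of S] disj by (simp add: ssum_def)
      have suT: "ssum T u = 0" using ssum_RI[OF uR, of T] disj by (simp add: ssum_def inf_commute)
      have wS: "ssum S w = s" using uS svS w by (simp add: ssum_add)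
      have "T \<union> S = ?I" by blast
      then have vT: "ereal (ssum T v) = z ?I - ereal s" using gp_ofD(2)[OF v] by (simp add: z2_def[OF disj] s)
      have "w \<in> ?P"
      proof -
        have "w \<in> RI ?I" using uR vR w by (auto intro!: RI_add intro: RI_mono)
        moreover have "ereal (ssum ?I w) = z ?I"
        proof -
          have "ssum ?I w = ssum S w + ssum T w" using disj by (rule ssum_disj)
          moreover have "ssum T w = ssum T v" using suT w by (simp add: ssum_add)
          ultimately show ?thesis using wS vT zIf nm[of ?I] by (cases "z ?I") auto
        qed
        moreover have "ereal (ssum A w) \<le> z A" if A: "A \<subseteq> ?I" for A
        proof (cases "z A = \<infinity>")
          case False
          have zAr: "z A \<noteq> -\<infinity>" using nm[OF A] .
          obtain a where a: "z A = ereal a" using False zAr by (cases "z A") auto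
          have SI: "S \<subseteq> ?I" by blast
          have le: "z (A \<union> S) + z (A \<inter> S) \<le> z A + z S" using smod[OF A SI False] s by simp
          have n1: "z (A \<union> S) \<noteq> -\<infinity>" by (rule nm) (use A in blast)
          have n2: "z (A \<inter> S) \<noteq> -\<infinity>" by (rule nm) (use A in blast)
          obtain p where p: "z (A \<union> S) = ereal p" using le n1 n2 a s
            by (cases "z (A \<union> S)"; cases "z (A \<inter> S)") auto
          obtain q where q: "z (A \<inter> S) = ereal q" using le n1 n2 a s
            by (cases "z (A \<union> S)"; cases "z (A \<inter> S)") auto
          have "ereal (ssum (A \<inter> S) u) \<le> z (A \<inter> S)" using gp_ofD(3)[OF u] by blast
          then have u1: "ssum (A \<inter> S) u \<le> q" using q by simp
          have "(A \<inter> T) \<union> S = A \<union> S" using A by blast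
          moreover have "ereal (ssum (A \<inter> T) v) \<le> z2 S z (A \<inter> T)" using gp_ofD(3)[OF v] by blast
          ultimately have v1: "ssum (A \<inter> T) v \<le> p - s" using p by (simp add: z2_def[OF disj] s)
          have "ssum A w = ssum (A \<inter> S) u + ssum (A \<inter> T) v"
            using w ssum_RI[OF uR] ssum_RI[OF vR] by (simp add: ssum_add)
          moreover have "p + q \<le> a + s" using le p q a s by simp
          ultimately show ?thesis using u1 v1 a by simp
        qed simp
        ultimately show ?thesis by (simp add: gp_of_alt)
      qed
      then show "w \<in> ?G" using G_char wS by blast
    qed
  qed
qed

end




lemma P_sub_tangent:
  assumes "convex P" "f \<in> P" "p \<in> P"
  shows "p \<in> tangent_cone P f"
proof -
  have "f + \<epsilon> *\<^sub>R (p - f) \<in> P" if "0 < \<epsilon>" "\<epsilon> < 1" for \<epsilon>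
  proof -
    have "f + \<epsilon> *\<^sub>R (p - f) = (1 - \<epsilon>) *\<^sub>R f + \<epsilon> *\<^sub>R p" by (simp add: algebra_simps)
    then show ?thesis using assms that convexD[OF assms(1) assms(2) assms(3), of "1 - \<epsilon>" \<epsilon>] by simp
  qed
  moreover have "p = f + (p - f)" by simp
  ultimately show ?thesis unfolding tangent_cone_def by (intro CollectI exI[of _ "p - f"]) (auto intro!: exI[of _ 1])
qed

lemma tangent_scale:
  assumes "f + x \<in> tangent_cone P f" "t > 0"
  shows "f + t *\<^sub>R x \<in> tangent_cone P f"
proof -
  obtain x' e where x': "f + x = f + x'" and e: "e > 0" and ex: "\<forall>\<epsilon>. 0 < \<epsilon> \<and> \<epsilon> < e \<longrightarrow> f + \<epsilon> *\<^sub>R x' \<in> P"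
    using assms(1) unfolding tangent_cone_def by blast
  have xx: "x' = x" using x' by simp
  have "\<forall>\<epsilon>. 0 < \<epsilon> \<and> \<epsilon> < e / t \<longrightarrow> f + \<epsilon> *\<^sub>R (t *\<^sub>R x) \<in> P"
  proof (intro allI impI)
    fix \<epsilon> assume "0 < \<epsilon> \<and> \<epsilon> < e / t"
    then have "0 < \<epsilon> * t \<and> \<epsilon> * t < e" using assms(2) by (simp add: field_simps)
    then show "f + \<epsilon> *\<^sub>R (t *\<^sub>R x) \<in> P" using ex xx by simp
  qed
  moreover have "e / t > 0" using e assms(2) by simp
  ultimately show ?thesis unfolding tangent_cone_def by blast
qed

lemma f_in_tangent: "f \<in> P \<Longrightarrow> f \<in> tangent_cone P f" for P :: "('e::finite) poly"
proof -
  assume "f \<in> P"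
  then have "\<exists>e>0. \<forall>\<epsilon>. 0 < \<epsilon> \<and> \<epsilon> < e \<longrightarrow> f + \<epsilon> *\<^sub>R (0::'e pt) \<in> P" by (intro exI[of _ 1]) auto
  then have "f + 0 \<in> tangent_cone P f" unfolding tangent_cone_def by blast
  then show ?thesis by simp
qed

lemma maxface_face:
  fixes P :: "('e::finite) poly"
  assumes cP: "convex P" and f: "f \<in> max_face S P"
  shows "max_face S P = P \<inter> {x. ind S \<bullet> x = ssum S f}" "max_face S P face_of P"
proof -
  have fP: "f \<in> P" and fm: "\<forall>y\<in>P. ssum S y \<le> ssum S f" using f by (auto simp: max_face_alt)
  show eq: "max_face S P = P \<inter> {x. ind S \<bullet> x = ssum S f}"
    using fP fm by (auto simp: max_face_alt ssum_inner[symmetric] intro: antisym)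
  have "(P \<inter> {x. ind S \<bullet> x = ssum S f}) face_of P"
    by (rule face_of_Int_supporting_hyperplane_le[OF cP]) (use fm in \<open>auto simp: ssum_inner\<close>)
  then show "max_face S P face_of P" using eq by simp
qed

lemma G1:
  fixes P :: "('e::finite) poly"
  assumes cP: "convex P" and F: "F face_of P" "F \<noteq> {}" and bd: "bounded_above_on S (tangent_cone P f)"
    and f: "f \<in> rel_interior F"
  shows "bounded_above_on S P \<and> F \<subseteq> max_face S P"
proof -
  have fF: "f \<in> F" using f rel_interior_subset by blast
  have fP: "f \<in> P" using fF F face_of_imp_subset by blast
  obtain M where M: "\<And>y. y \<in> tangent_cone P f \<Longrightarrow> ssum S y \<le> M" using bd by (auto simp: bounded_above_on_def ssum_def)
  have le: "ssum S p \<le> ssum S f" if p: "p \<in> P" for p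
  proof (rule ccontr)
    assume "\<not> ssum S p \<le> ssum S f"
    then have pos: "ssum S (p - f) > 0" by (simp add: ssum_diff)
    define t where "t = (\<bar>M - ssum S f\<bar> + 1) / ssum S (p - f)"
    have t: "t > 0" using pos by (simp add: t_def)
    have "f + (p - f) \<in> tangent_cone P f" using P_sub_tangent[OF cP fP p] by simp
    then have "f + t *\<^sub>R (p - f) \<in> tangent_cone P f" using tangent_scale t by blast
    then have "ssum S (f + t *\<^sub>R (p - f)) \<le> M" by (rule M)
    moreover have "ssum S (f + t *\<^sub>R (p - f)) = ssum S f + \<bar>M - ssum S f\<bar> + 1"
      using pos by (simp add: ssum_add ssum_scale t_def)
    ultimately show False by linarith
  qed
  then have fmax: "f \<in> max_face S P" using fP by (simp add: max_face_alt)
  have "bounded_above_on S P" using le unfolding bounded_above_on_def ssum_def by blast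
  moreover have "F \<subseteq> max_face S P"
    by (rule subset_of_face_of[OF maxface_face(2)[OF cP fmax] face_of_imp_subset[OF F(1)]]) (use f fmax in blast)
  ultimately show ?thesis by blast
qed

lemma G2:
  fixes P :: "('e::finite) poly"
  assumes cP: "convex P" and fG: "f \<in> max_face S P"
  shows "bounded_above_on S (tangent_cone P f) \<and> max_face S (tangent_cone P f) = tangent_cone (max_face S P) f"
proof -
  have fP: "f \<in> P" and fm: "\<And>y. y \<in> P \<Longrightarrow> ssum S y \<le> ssum S f" using fG by (auto simp: max_face_alt)
  have Geq: "max_face S P = P \<inter> {x. ind S \<bullet> x = ssum S f}" by (rule maxface_face(1)[OF cP fG])
  have dir: "ssum S x \<le> 0" if "\<forall>\<epsilon>. 0 < \<epsilon> \<and> \<epsilon> < e \<longrightarrow> f + \<epsilon> *\<^sub>R x \<in> P" "e > 0" for x e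
  proof -
    have "f + (e/2) *\<^sub>R x \<in> P" using that by simp
    then have "ssum S (f + (e/2) *\<^sub>R x) \<le> ssum S f" by (rule fm)
    then have "(e/2) * ssum S x \<le> 0" by (simp add: ssum_add ssum_scale)
    then show ?thesis using that(2) by (simp add: mult_le_0_iff)
  qed
  have bnd: "ssum S y \<le> ssum S f" if yC: "y \<in> tangent_cone P f" for y
  proof -
    obtain x e where "y = f + x" "e > 0" "\<forall>\<epsilon>. 0 < \<epsilon> \<and> \<epsilon> < e \<longrightarrow> f + \<epsilon> *\<^sub>R x \<in> P"
      using yC unfolding tangent_cone_def by blast
    then show ?thesis using dir by (simp add: ssum_add)
  qed
  have "bounded_above_on S (tangent_cone P f)" using bnd unfolding bounded_above_on_def ssum_def by blast
  moreover have "max_face S (tangent_cone P f) = tangent_cone (max_face S P) f"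
  proof
    show "max_face S (tangent_cone P f) \<subseteq> tangent_cone (max_face S P) f"
    proof
      fix y assume y: "y \<in> max_face S (tangent_cone P f)"
      then have yC: "y \<in> tangent_cone P f" and ymax: "ssum S f \<le> ssum S y"
        using f_in_tangent[OF fP] by (auto simp: max_face_alt)
      obtain x e where yx: "y = f + x" and e: "e > 0" and ex: "\<forall>\<epsilon>. 0 < \<epsilon> \<and> \<epsilon> < e \<longrightarrow> f + \<epsilon> *\<^sub>R x \<in> P"
        using yC unfolding tangent_cone_def by blast
      have sx: "ssum S x = 0" using dir[OF ex e] ymax yx by (simp add: ssum_add)
      have "\<forall>\<epsilon>. 0 < \<epsilon> \<and> \<epsilon> < e \<longrightarrow> f + \<epsilon> *\<^sub>R x \<in> max_face S P"
        using ex sx by (auto simp: Geq ssum_inner[symmetric] ssum_add ssum_scale)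
      then show "y \<in> tangent_cone (max_face S P) f" unfolding tangent_cone_def using e yx by blast
    qed
    show "tangent_cone (max_face S P) f \<subseteq> max_face S (tangent_cone P f)"
    proof
      fix y assume "y \<in> tangent_cone (max_face S P) f"
      then obtain x e where yx: "y = f + x" and e: "e > 0" and ex: "\<forall>\<epsilon>. 0 < \<epsilon> \<and> \<epsilon> < e \<longrightarrow> f + \<epsilon> *\<^sub>R x \<in> max_face S P"
        unfolding tangent_cone_def by blast
      have exP: "\<forall>\<epsilon>. 0 < \<epsilon> \<and> \<epsilon> < e \<longrightarrow> f + \<epsilon> *\<^sub>R x \<in> P" using ex Geq by blast
      have "f + (e/2) *\<^sub>R x \<in> max_face S P" using ex e by simp
      then have "ssum S (f + (e/2) *\<^sub>R x) = ssum S f" by (simp add: Geq ssum_inner)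
      then have sx: "ssum S x = 0" using e by (simp add: ssum_add ssum_scale)
      have yC: "y \<in> tangent_cone P f" unfolding tangent_cone_def using yx e exP by blast
      have "ssum S y = ssum S f" using yx sx by (simp add: ssum_add)
      then show "y \<in> max_face S (tangent_cone P f)" using yC bnd by (auto simp: max_face_alt)
    qed
  qed
  ultimately show ?thesis by blast
qed

lemma G3:
  fixes z :: "('e::finite) set \<Rightarrow> ereal"
  assumes sm: "ext_submodular I z" and Gne: "max_face S (gp_of I z :: 'e poly) \<noteq> {}"
  shows "lineality (max_face S (gp_of I z)) = lineality (gp_of I z)"
proof
  let ?P = "gp_of I z :: 'e poly"
  let ?G = "max_face S ?P"
  show "lineality ?P \<subseteq> lineality ?G"
  proof
    fix d assume d: "d \<in> lineality ?P"
    have dd: "\<And>x t. x \<in> ?P \<Longrightarrow> x + t *\<^sub>R d \<in> ?P" using d by (simp add: lineality_def)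
    show "d \<in> lineality ?G" unfolding lineality_def
    proof (intro CollectI ballI allI)
      fix x t assume x: "x \<in> ?G"
      then have xP: "x \<in> ?P" and xm: "\<And>y. y \<in> ?P \<Longrightarrow> ssum S y \<le> ssum S x" by (auto simp: max_face_alt)
      have "ssum S (x + 1 *\<^sub>R d) \<le> ssum S x" "ssum S (x + (-1) *\<^sub>R d) \<le> ssum S x"
        using xm dd[OF xP] by blast+
      then have "ssum S d = 0" by (simp add: ssum_add ssum_scale ssum_diff)
      then have "ssum S (x + t *\<^sub>R d) = ssum S x" by (simp add: ssum_add ssum_scale)
      then show "x + t *\<^sub>R d \<in> ?G" using dd[OF xP] xm by (auto simp: max_face_alt)
    qed
  qed
  show "lineality ?G \<subseteq> lineality ?P"
  proof
    fix d assume d: "d \<in> lineality ?G"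
    obtain g where g: "g \<in> ?G" using Gne by blast
    have gt: "\<And>t. g + t *\<^sub>R d \<in> ?P" using d g by (auto simp: lineality_def max_face_alt)
    have gP: "g \<in> ?P" using gt[of 0] by simp
    have dR: "d \<in> RI I"
    proof -
      have "(g + 1 *\<^sub>R d) - g \<in> RI I" using gp_ofD(1)[OF gt[of 1]] gp_ofD(1)[OF gP] by (rule RI_diff)
      then show ?thesis by simp
    qed
    have dI: "ssum I d = 0"
    proof -
      have "ereal (ssum I (g + 1 *\<^sub>R d)) = ereal (ssum I g)" using gp_ofD(2)[OF gt[of 1]] gp_ofD(2)[OF gP] by simp
      then show ?thesis by (simp add: ssum_add)
    qed
    have dA: "ssum A d = 0" if A: "A \<subseteq> I" "z A \<noteq> \<infinity>" for A
    proof -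
      have zAr: "z A \<noteq> -\<infinity>" using sm A(1) unfolding ext_submodular_def by blast
      obtain r where r: "z A = ereal r" using A(2) zAr by (cases "z A") auto
      have le: "ssum A g + t * ssum A d \<le> r" for t
        using gp_ofD(3)[OF gt[of t] A(1)] r by (simp add: ssum_add ssum_scale)
      show ?thesis
      proof (rule ccontr)
        assume ne: "ssum A d \<noteq> 0"
        define t where "t = (\<bar>r - ssum A g\<bar> + 1) / ssum A d"
        have "t * ssum A d = \<bar>r - ssum A g\<bar> + 1" using ne by (simp add: t_def)
        then show False using le[of t] by linarith
      qed
    qed
    show "d \<in> lineality ?P" unfolding lineality_def
    proof (intro CollectI ballI allI)
      fix x t assume x: "x \<in> ?P"
      have "x + t *\<^sub>R d \<in> RI I" using gp_ofD(1)[OF x] dR by (simp add: RI_add RI_scale)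
      moreover have "ereal (ssum I (x + t *\<^sub>R d)) = z I" using gp_ofD(2)[OF x] dI by (simp add: ssum_add ssum_scale)
      moreover have "ereal (ssum A (x + t *\<^sub>R d)) \<le> z A" if A: "A \<subseteq> I" for A
      proof (cases "z A = \<infinity>")
        case False
        then show ?thesis using gp_ofD(3)[OF x A] dA[OF A False] by (simp add: ssum_add ssum_scale)
      qed simp
      ultimately show "x + t *\<^sub>R d \<in> ?P" by (simp add: gp_of_alt)
    qed
  qed
qed




lemma single_delta:
  fixes u :: "'a \<Rightarrow> 'k::comm_ring_1"
  assumes fin: "finite K" "finite A" and mem: "\<And>a. a \<in> A \<Longrightarrow> \<phi> a \<in> K"
  shows "(\<Sum>C\<in>K. if W C then (\<Sum>a\<in>A. if \<phi> a = C then u a else 0) else 0) = (\<Sum>a\<in>A. if W (\<phi> a) then u a else 0)"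
proof -
  have "(\<Sum>C\<in>K. if W C then (\<Sum>a\<in>A. if \<phi> a = C then u a else 0) else 0)
      = (\<Sum>C\<in>K. \<Sum>a\<in>A. if C = \<phi> a then (if W C then u a else 0) else 0)"
  proof (intro sum.cong refl)
    fix C assume "C \<in> K"
    show "(if W C then (\<Sum>a\<in>A. if \<phi> a = C then u a else 0) else 0) = (\<Sum>a\<in>A. if C = \<phi> a then (if W C then u a else 0) else 0)"
    proof (cases "W C")
      case True then show ?thesis by (auto intro!: sum.cong)
    next
      case False
      then have "\<forall>a\<in>A. (if C = \<phi> a then (if W C then u a else 0) else 0) = 0" by auto
      then show ?thesis using False by simp
    qed
  qed
  also have "\<dots> = (\<Sum>a\<in>A. \<Sum>C\<in>K. if C = \<phi> a then (if W C then u a else 0) else 0)" by (rule sum.swap)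
  also have "\<dots> = (\<Sum>a\<in>A. if W (\<phi> a) then u a else 0)"
  proof (intro sum.cong refl)
    fix a assume "a \<in> A"
    then show "(\<Sum>C\<in>K. if C = \<phi> a then (if W C then u a else 0) else 0) = (if W (\<phi> a) then u a else 0)"
      by (rule sum_delta_in[OF fin(1) mem, where X="\<lambda>C. if W C then u a else 0"])
  qed
  finally show ?thesis .
qed

lemma sum_collect1:
  fixes w :: "'a \<Rightarrow> 'k::comm_ring_1"
  assumes "finite M" "\<And>P. P \<in> A \<Longrightarrow> g P \<in> M"
  shows "(\<Sum>X\<in>M. (\<Sum>P\<in>A. if g P = X then w P else 0) * \<phi> X) = (\<Sum>P\<in>A. w P * \<phi> (g P))"
proof -
  have "(\<Sum>X\<in>M. (\<Sum>P\<in>A. if g P = X then w P else 0) * \<phi> X)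
      = (\<Sum>X\<in>M. \<Sum>P\<in>A. if X = g P then w P * \<phi> X else 0)"
    by (auto simp: sum_distrib_right intro!: sum.cong)
  also have "\<dots> = (\<Sum>P\<in>A. \<Sum>X\<in>M. if X = g P then w P * \<phi> X else 0)" by (rule sum.swap)
  also have "\<dots> = (\<Sum>P\<in>A. w P * \<phi> (g P))"
  proof (intro sum.cong refl)
    fix P assume "P \<in> A"
    then show "(\<Sum>X\<in>M. if X = g P then w P * \<phi> X else 0) = w P * \<phi> (g P)"
      by (rule sum_delta_in[OF assms(1) assms(2), where X="\<lambda>X. w P * \<phi> X"])
  qed
  finally show ?thesis .
qed

lemma bg_basis_empty: "bg_basis {} R = 0"
proof -
  have "{F. F face_of {} \<and> F \<noteq> {} \<and> rel_bounded_face {} F \<and> face_cone {} F = R} = {}" by auto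
  then show ?thesis unfolding bg_basis_def by (simp only: sum.empty)
qed

lemma face_cone_tangent: "face_cone P F = tangent_cone P (SOME f. f \<in> rel_interior F)"
  by (simp add: face_cone_def)

context
  fixes S T :: "('e::finite) set"
  assumes disj: "S \<inter> T = {}"
begin

lemma Fs_G:
  assumes P: "P \<in> GP (S \<union> T)" and Gne: "max_face S P \<noteq> {}"
  shows "Fs (max_face S P) = {F \<in> Fs P. F \<subseteq> max_face S P}"
proof -
  obtain z where z: "ext_submodular (S \<union> T) z" "P = gp_of (S \<union> T) z" using P GP_E by blast
  obtain g where g: "g \<in> max_face S P" using Gne by blast
  have Gf: "max_face S P face_of P" using maxface_face(2)[OF GP_convex[OF P] g] .
  have lin: "lineality (max_face S P) = lineality P" using G3[OF z(1)] Gne z(2) by simp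
  show ?thesis unfolding Fs_def rel_bounded_face_def lin using face_of_face[OF Gf] by auto
qed

lemma comult_key:
  fixes R1 R2 :: "'e poly"
  assumes P: "P \<in> GP (S \<union> T)" and fK: "finite K" and K: "\<And>F. F \<in> Fs P \<Longrightarrow> face_cone P F \<in> K"
  shows "(\<Sum>C\<in>K. if bounded_above_on S C \<and> restr S (max_face S C) = R1 \<and> restr T (max_face S C) = R2
            then bg_basis P C else (0::'k::comm_ring_1))
       = (if bounded_above_on S P then bg_basis (restr S (max_face S P)) R1 * bg_basis (restr T (max_face S P)) R2 else (0::'k))"
proof -
  define \<Phi> where "\<Phi> = (\<lambda>C. bounded_above_on S C \<and> restr S (max_face S C) = R1 \<and> restr T (max_face S C) = R2)"
  have fP: "finite (Fs P)" using finite_Fs[OF P] .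
  have cP: "convex P" using GP_convex[OF P] .
  have bgP: "(bg_basis P C :: 'k) = (\<Sum>F\<in>Fs P. if face_cone P F = C then ((-1) ^ dimension F) else (0::'k))" for C
    by (simp add: bg_basis_alt[OF fP])
  have A: "(\<Sum>C\<in>K. if \<Phi> C then bg_basis P C else (0::'k)) = (\<Sum>F\<in>Fs P. if \<Phi> (face_cone P F) then ((-1) ^ dimension F) else (0::'k))"
    unfolding bgP by (rule single_delta[OF fK fP K])
  have G1': "F \<subseteq> max_face S P \<and> bounded_above_on S P" if F: "F \<in> Fs P" "bounded_above_on S (face_cone P F)" for F
  proof -
    have F': "F face_of P" "F \<noteq> {}" using F by (auto simp: Fs_def)
    show ?thesis using G1[OF cP F' _ some_ri[OF F']] F(2) unfolding face_cone_def by blast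
  qed
  have main: "(\<Sum>F\<in>Fs P. if \<Phi> (face_cone P F) then ((-1) ^ dimension F) else (0::'k)) =
      (if bounded_above_on S P then bg_basis (restr S (max_face S P)) R1 * bg_basis (restr T (max_face S P)) R2 else (0::'k))"
  proof (cases "bounded_above_on S P")
    case False
    then have "\<forall>F\<in>Fs P. \<not> \<Phi> (face_cone P F)" using G1' by (auto simp: \<Phi>_def)
    then show "(\<Sum>F\<in>Fs P. if \<Phi> (face_cone P F) then ((-1) ^ dimension F) else (0::'k)) =
      (if bounded_above_on S P then bg_basis (restr S (max_face S P)) R1 * bg_basis (restr T (max_face S P)) R2 else (0::'k))"
      using False by simp
  next
    case bdP: True
    show "(\<Sum>F\<in>Fs P. if \<Phi> (face_cone P F) then ((-1) ^ dimension F) else (0::'k)) =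
      (if bounded_above_on S P then bg_basis (restr S (max_face S P)) R1 * bg_basis (restr T (max_face S P)) R2 else (0::'k))"
    proof (cases "max_face S P = {}")
      case True
      then have "\<forall>F\<in>Fs P. \<not> \<Phi> (face_cone P F)" using G1' by (auto simp: \<Phi>_def Fs_def)
      then show ?thesis using True by (simp add: restr_def bg_basis_empty)
    next
      case Gne: False
      define G where "G = max_face S P"
      obtain z where z: "ext_submodular (S \<union> T) z" "P = gp_of (S \<union> T) z" using P GP_E by blast
      have zS: "z S \<noteq> \<infinity>" using struct_G(1)[OF disj z(1)] Gne z(2) by simp
      define G1 where "G1 = gp_of S z"
      define G2 where "G2 = gp_of T (z2 S z)"
      have Geq: "G = psum G1 G2" using struct_G(2)[OF disj z(1)] Gne z(2) by (simp add: G_def G1_def G2_def)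
      have G1GP: "G1 \<in> GP S" using sub_S[OF disj z(1) zS] by (auto simp: GP_def G1_def)
      have G2GP: "G2 \<in> GP T" using sub_T[OF disj z(1) zS] by (auto simp: GP_def G2_def)
      have G1R: "G1 \<subseteq> RI S" and G2R: "G2 \<subseteq> RI T" using GP_sub G1GP G2GP by auto
      have G12ne: "G1 \<noteq> {}" "G2 \<noteq> {}" using Gne Geq by (auto simp: G_def psum_def)
      have rS: "restr S G = G1" using restr_psum1[OF disj G1R G2R G12ne(2)] Geq by (simp add: restr_eq)
      have rT: "restr T G = G2" using restr_psum2[OF disj G1R G2R G12ne(1)] Geq by (simp add: restr_eq)
      have fG1: "finite (Fs G1)" and fG2: "finite (Fs G2)" using finite_Fs G1GP G2GP by auto
      have FsG: "Fs G = {F \<in> Fs P. F \<subseteq> G}" using Fs_G[OF P] Gne by (simp add: G_def)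
      have RHS: "bg_basis G1 R1 * bg_basis G2 R2 =
          (\<Sum>H\<in>Fs G. if restr S (face_cone G H) = R1 \<and> restr T (face_cone G H) = R2 then ((-1) ^ dimension H) else (0::'k))"
      proof -
        have "bg_basis G1 R1 * bg_basis G2 R2 =
            (\<Sum>F1\<in>Fs G1. if face_cone G1 F1 = R1 then ((-1) ^ dimension F1) else (0::'k)) * (\<Sum>F2\<in>Fs G2. if face_cone G2 F2 = R2 then ((-1) ^ dimension F2) else (0::'k))"
          by (simp add: bg_basis_alt[OF fG1] bg_basis_alt[OF fG2])
        also have "\<dots> = (\<Sum>F1\<in>Fs G1. \<Sum>F2\<in>Fs G2. if face_cone G1 F1 = R1 \<and> face_cone G2 F2 = R2 then ((-1) ^ dimension F1) * ((-1) ^ dimension F2) else (0::'k))"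
          by (auto simp: sum_product intro!: sum.cong)
        also have "\<dots> = (\<Sum>(F1, F2)\<in>Fs G1 \<times> Fs G2. if face_cone G1 F1 = R1 \<and> face_cone G2 F2 = R2 then ((-1) ^ dimension F1) * ((-1) ^ dimension F2) else (0::'k))"
          by (simp add: sum.cartesian_product)
        also have "\<dots> = (\<Sum>(F1, F2)\<in>Fs G1 \<times> Fs G2. if restr S (face_cone G (psum F1 F2)) = R1 \<and> restr T (face_cone G (psum F1 F2)) = R2
              then ((-1) ^ dimension (psum F1 F2)) else (0::'k))"
        proof (intro sum.cong refl, clarify)
          fix F1 F2 assume F1: "F1 \<in> Fs G1" and F2: "F2 \<in> Fs G2"
          then have F1': "F1 face_of G1" "F1 \<noteq> {}" and F2': "F2 face_of G2" "F2 \<noteq> {}" by (auto simp: Fs_def)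
          have fc: "face_cone G (psum F1 F2) = psum (face_cone G1 F1) (face_cone G2 F2)"
            unfolding Geq by (rule face_cone_psum[OF disj G1GP G2GP F1' F2'])
          have c1: "face_cone G1 F1 \<subseteq> RI S" "face_cone G1 F1 \<noteq> {}"
            using face_cone_GP[OF G1GP F1'] GP_sub face_cone_ne[OF G1GP F1'] by auto
          have c2: "face_cone G2 F2 \<subseteq> RI T" "face_cone G2 F2 \<noteq> {}"
            using face_cone_GP[OF G2GP F2'] GP_sub face_cone_ne[OF G2GP F2'] by auto
          have "restr S (face_cone G (psum F1 F2)) = face_cone G1 F1"
            unfolding fc restr_eq using restr_psum1[OF disj c1(1) c2(1) c2(2)] .
          moreover have "restr T (face_cone G (psum F1 F2)) = face_cone G2 F2"
            unfolding fc restr_eq using restr_psum2[OF disj c1(1) c2(1) c1(2)] .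
          moreover have "((-1::'k) ^ dimension (psum F1 F2)) = ((-1) ^ dimension F1) * ((-1) ^ dimension F2)"
          proof -
            have "F1 \<subseteq> RI S" "F2 \<subseteq> RI T" using F1' F2' face_of_imp_subset G1R G2R by blast+
            then have "dimension (psum F1 F2) = dimension F1 + dimension F2"
              using dimension_psum[OF disj] F1' F2' by blast
            then show ?thesis by (simp add: power_add)
          qed
          ultimately show "(if face_cone G1 F1 = R1 \<and> face_cone G2 F2 = R2 then ((-1) ^ dimension F1) * ((-1) ^ dimension F2) else (0::'k)) =
            (if restr S (face_cone G (psum F1 F2)) = R1 \<and> restr T (face_cone G (psum F1 F2)) = R2 then ((-1) ^ dimension (psum F1 F2)) else (0::'k))"
            by simp
        qed
        also have "\<dots> = (\<Sum>H\<in>Fs G. if restr S (face_cone G H) = R1 \<and> restr T (face_cone G H) = R2 then ((-1) ^ dimension H) else (0::'k))"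
          unfolding Geq Fs_psum[OF disj G1GP G2GP]
          by (subst sum.reindex[OF inj_Fs[OF disj G1GP G2GP]]) (simp add: case_prod_unfold)
        finally show ?thesis .
      qed
      have LHS: "(\<Sum>F\<in>Fs P. if \<Phi> (face_cone P F) then ((-1) ^ dimension F) else (0::'k)) =
          (\<Sum>H\<in>Fs G. if restr S (face_cone G H) = R1 \<and> restr T (face_cone G H) = R2 then ((-1) ^ dimension H) else (0::'k))"
      proof -
        have eqF: "(if \<Phi> (face_cone P F) then ((-1) ^ dimension F) else (0::'k)) =
            (if F \<subseteq> G then (if restr S (face_cone G F) = R1 \<and> restr T (face_cone G F) = R2 then ((-1) ^ dimension F) else (0::'k)) else (0::'k))"
          if F: "F \<in> Fs P" for F
        proof (cases "F \<subseteq> G")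
          case True
          have F': "F face_of P" "F \<noteq> {}" using F by (auto simp: Fs_def)
          define f where "f = (SOME f. f \<in> rel_interior F)"
          have fr: "f \<in> rel_interior F" unfolding f_def using some_ri[OF F'] .
          have fG: "f \<in> G" using fr True rel_interior_subset by blast
          have "bounded_above_on S (tangent_cone P f) \<and> max_face S (tangent_cone P f) = tangent_cone G f"
            using G2[OF cP] fG by (simp add: G_def)
          then have "bounded_above_on S (face_cone P F) \<and> max_face S (face_cone P F) = face_cone G F"
            by (simp add: face_cone_def f_def[symmetric])
          then show ?thesis using True by (simp add: \<Phi>_def)
        next
          case False
          then have "\<not> \<Phi> (face_cone P F)" using G1' F by (auto simp: \<Phi>_def G_def)
          then show ?thesis using False by simp
        qed
        have "(\<Sum>F\<in>Fs P. if \<Phi> (face_cone P F) then ((-1) ^ dimension F) else (0::'k)) =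
            (\<Sum>F\<in>Fs P. if F \<subseteq> G then (if restr S (face_cone G F) = R1 \<and> restr T (face_cone G F) = R2 then ((-1) ^ dimension F) else (0::'k)) else (0::'k))"
          using eqF by (intro sum.cong refl) blast
        also have "\<dots> = (\<Sum>F\<in>{F \<in> Fs P. F \<subseteq> G}. if restr S (face_cone G F) = R1 \<and> restr T (face_cone G F) = R2 then ((-1) ^ dimension F) else (0::'k))"
          using fP by (simp add: sum.inter_filter)
        finally show ?thesis using FsG by simp
      qed
      show ?thesis using LHS RHS bdP rS rT by (simp add: G_def)
    qed
  qed
  show ?thesis using A main by (simp add: \<Phi>_def)
qed

end




lemma swap_if:
  fixes x :: "'a \<Rightarrow> 'k::comm_ring_1"
  shows "(\<Sum>C\<in>K. if W C then (\<Sum>P\<in>A. x P * f P C) else 0) = (\<Sum>P\<in>A. x P * (\<Sum>C\<in>K. if W C then f P C else 0))"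
proof -
  have "(\<Sum>C\<in>K. if W C then (\<Sum>P\<in>A. x P * f P C) else 0) = (\<Sum>C\<in>K. \<Sum>P\<in>A. if W C then x P * f P C else 0)"
    by (intro sum.cong refl) auto
  also have "\<dots> = (\<Sum>P\<in>A. \<Sum>C\<in>K. if W C then x P * f P C else 0)" by (rule sum.swap)
  also have "\<dots> = (\<Sum>P\<in>A. x P * (\<Sum>C\<in>K. if W C then f P C else 0))"
    by (intro sum.cong refl) (simp add: sum_distrib_left if_distrib[of "\<lambda>u. _ * u"] cong: if_cong)
  finally show ?thesis .
qed

lemma conj_comult:
  fixes a :: "('e::finite) poly \<Rightarrow> 'k::comm_ring_1"
  assumes disj: "S \<inter> T = {}" and a: "a \<in> span_of (GP (S \<union> T))"
  shows "comult S T (bg a) = tensor_ext bg_basis bg_basis (comult S T a)"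
proof (rule ext)
  fix Y :: "'e poly \<times> 'e poly"
  obtain R1 R2 where Y: "Y = (R1, R2)" by (cases Y)
  define A where "A = supp a"
  have fA: "finite A" and AG: "A \<subseteq> GP (S \<union> T)" using a by (auto simp: span_of_def A_def)
  define K where "K = (\<Union>P\<in>A. face_cone P ` Fs P)"
  have fK: "finite K" unfolding K_def using fA AG finite_Fs by blast
  have sK: "supp (bg a) \<subseteq> K" unfolding K_def A_def using supp_bg_K[of a "S \<union> T"] AG A_def by blast
  define \<Phi> where "\<Phi> = (\<lambda>C. bounded_above_on S C \<and> restr S (max_face S C) = R1 \<and> restr T (max_face S C) = R2)"
  define DD where "DD = (\<lambda>P. (restr S (max_face S P), restr T (max_face S P)))"
  define \<phi> where "\<phi> = (\<lambda>Y::'e poly \<times> 'e poly. (bg_basis (fst Y) R1 * bg_basis (snd Y) R2 :: 'k))"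
  have bga: "bg a C = (\<Sum>P\<in>A. a P * bg_basis P C)" for C by (simp add: bg_def lin_ext_def A_def)
  have "comult S T (bg a) Y = (\<Sum>C\<in>supp (bg a). if \<Phi> C then bg a C else 0)"
    unfolding Y comult_def \<Phi>_def by simp
  also have "\<dots> = (\<Sum>C\<in>K. if \<Phi> C then bg a C else 0)"
    by (rule supp_sum_eq[OF fK sK]) simp
  also have "\<dots> = (\<Sum>C\<in>K. if \<Phi> C then (\<Sum>P\<in>A. a P * bg_basis P C) else 0)" by (simp only: bga)
  also have "\<dots> = (\<Sum>P\<in>A. a P * (\<Sum>C\<in>K. if \<Phi> C then bg_basis P C else 0))" by (rule swap_if)
  also have "\<dots> = (\<Sum>P\<in>A. a P * (if bounded_above_on S P then \<phi> (DD P) else 0))"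
  proof (intro sum.cong refl)
    fix P assume P: "P \<in> A"
    have "(\<Sum>C\<in>K. if \<Phi> C then bg_basis P C else (0::'k)) =
      (if bounded_above_on S P then bg_basis (restr S (max_face S P)) R1 * bg_basis (restr T (max_face S P)) R2 else 0)"
      unfolding \<Phi>_def by (rule comult_key[OF disj]) (use P AG fK in \<open>auto simp: K_def\<close>)
    then show "a P * (\<Sum>C\<in>K. if \<Phi> C then bg_basis P C else 0) = a P * (if bounded_above_on S P then \<phi> (DD P) else 0)"
      by (simp add: \<phi>_def DD_def)
  qed
  finally have LHS: "comult S T (bg a) Y = (\<Sum>P\<in>A. a P * (if bounded_above_on S P then \<phi> (DD P) else 0))" .
  define M where "M = DD ` A"
  have fM: "finite M" using fA by (simp add: M_def)
  have ceq: "comult S T a Y' = (\<Sum>P\<in>A. if DD P = Y' then (if bounded_above_on S P then a P else 0) else 0)" for Y'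
  proof -
    obtain X1 X2 where "Y' = (X1, X2)" by (cases Y')
    then show ?thesis unfolding comult_def A_def DD_def by (auto intro!: sum.cong)
  qed
  have sM: "supp (comult S T a) \<subseteq> M"
  proof
    fix Y' assume Y': "Y' \<in> supp (comult S T a)"
    show "Y' \<in> M"
    proof (rule ccontr)
      assume "Y' \<notin> M"
      then have "\<forall>P\<in>A. DD P \<noteq> Y'" by (auto simp: M_def)
      then have "comult S T a Y' = 0" unfolding ceq by simp
      then show False using Y' by (simp add: supp_def)
    qed
  qed
  have "tensor_ext bg_basis bg_basis (comult S T a) Y = (\<Sum>Y'\<in>supp (comult S T a). comult S T a Y' * \<phi> Y')"
    unfolding Y tensor_ext_def \<phi>_def by (simp add: mult.assoc)
  also have "\<dots> = (\<Sum>Y'\<in>M. comult S T a Y' * \<phi> Y')"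
    by (rule supp_sum_eq[OF fM sM]) simp
  also have "\<dots> = (\<Sum>Y'\<in>M. (\<Sum>P\<in>A. if DD P = Y' then (if bounded_above_on S P then a P else 0) else 0) * \<phi> Y')"
    by (simp only: ceq)
  also have "\<dots> = (\<Sum>P\<in>A. (if bounded_above_on S P then a P else 0) * \<phi> (DD P))"
    by (rule sum_collect1[OF fM]) (simp add: M_def)
  also have "\<dots> = (\<Sum>P\<in>A. a P * (if bounded_above_on S P then \<phi> (DD P) else 0))"
    by (intro sum.cong refl) simp
  finally show "comult S T (bg a) Y = tensor_ext bg_basis bg_basis (comult S T a) Y" using LHS by simp
qed


theorem proposition3p1:
  fixes dummy :: "'k::field itself"
  shows
   \<comment> \<open>each cone_F(P) appearing lies in CGP^+[I]\<close>
   "(\<forall>(I::('e::finite) set) P F. P \<in> GP I \<and> F face_of P \<and> F \<noteq> {} \<and> rel_bounded_face P F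
        \<longrightarrow> face_cone P F \<in> CGP I)
   \<and> \<comment> \<open>bg[I] maps GP^+[I] into CGP^+[I]\<close>
     (\<forall>(I::'e set) (c::'e poly \<Rightarrow> 'k). c \<in> span_of (GP I) \<longrightarrow> bg c \<in> span_of (CGP I))
   \<and> \<comment> \<open>naturality (morphism of species)\<close>
     (\<forall>(I::'e set) \<sigma> (c::'e poly \<Rightarrow> 'k). bij \<sigma> \<longrightarrow> c \<in> span_of (GP I) \<longrightarrow>
        bg (relabel \<sigma> c) = relabel \<sigma> (bg c))
   \<and> \<comment> \<open>unit\<close>
     bg (unit_elt :: 'e poly \<Rightarrow> 'k) = unit_elt
   \<and> \<comment> \<open>multiplicativity\<close>
     (\<forall>(S::'e set) T (a::'e poly \<Rightarrow> 'k) b. S \<inter> T = {} \<longrightarrow>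
        a \<in> span_of (GP S) \<longrightarrow> b \<in> span_of (GP T) \<longrightarrow>
        bg (mult S a b) = mult S (bg a) (bg b))
   \<and> \<comment> \<open>counit\<close>
     (\<forall>c::'e poly \<Rightarrow> 'k. c \<in> span_of (GP {}) \<longrightarrow> counit (bg c) = counit c)
   \<and> \<comment> \<open>comultiplicativity\<close>
     (\<forall>(S::'e set) T (a::'e poly \<Rightarrow> 'k). S \<inter> T = {} \<longrightarrow> a \<in> span_of (GP (S \<union> T)) \<longrightarrow>
        comult S T (bg a) = tensor_ext bg_basis bg_basis (comult S T a))"
  using conj1 conj2 conj_nat conj_unit conj_mult conj_counit conj_comult by blast

end
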